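(* Let $\lambda\in W\Lambda$ and $\alpha,\beta$ positive roots such that both $(\lambda,\lambda^\alpha)$ and $(\lambda^\alpha,\lambda^{\alpha,\beta})$ are admissible, where $\lambda^{\alpha,\beta}=(\lambda^\alpha)^\beta$. (i) If $(\alpha,\beta)=2$, then $\alpha=\beta$ and it is a simple root. (ii) Otherwise, there exist positive roots $\alpha'\ne\alpha$ and $\beta'$ such that $(\lambda,\lambda^{\alpha'})$ and $(\lambda^{\alpha'},\lambda^{\alpha',\beta'})$ are admissible and $\lambda^{\alpha,\beta}=\lambda^{\alpha',\beta'}$; the pair $(\alpha',\beta')$ is uniquely determined by these conditions.
   Context: Fix integers $n\ge2$, $r\ge n+2$. Let $\varepsilon_1,\dots,\varepsilon_n$ be an orthonormal basis of $\mathbb R^n$ (inner product $(\cdot,\cdot)$), $\bar\varepsilon_i=\varepsilon_i-\frac1n\sum_j\varepsilon_j$, $P=\sum_i\mathbb Z\bar\varepsilon_i$, simple roots $\alpha_i=\varepsilon_i-\varepsilon_{i+1}$ ($1\le i\le n-1$), $Q=\sum_i\mathbb Z\alpha_i$, $\theta=\alpha_1+\dots+\alpha_{n-1}$, positive roots $\varepsilon_i-\varepsilon_j$ ($i<j$). Fix $\Lambda\in P$ with $(\Lambda,\alpha_i)>0$ for all $i$ and $(\Lambda,\theta)<r$. $S_n$ acts by permuting the $\varepsilon_i$; $\ell(\sigma)$ is the length of $\sigma$. Each element of $W\Lambda=\{\sigma\Lambda+r\gamma:\sigma\in S_n,\gamma\in Q\}$ is uniquely written $\lambda=\sigma\Lambda+r\gamma$,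 and $\deg\lambda=\ell(\sigma)-2|\gamma|$, where $|\sum c_i\alpha_i|=\sum c_i$. For a positive root $\alpha$, $m_\alpha(\lambda)$ is the integer with $0<m_\alpha(\lambda)<r$, $m_\alpha(\lambda)\equiv(\lambda,\alpha)\bmod r$, and $\lambda^\alpha=\lambda-m_\alpha(\lambda)\alpha\in W\Lambda$. The pair $(\lambda,\lambda^\alpha)$ is called admissible if $\deg\lambda^\alpha=\deg\lambda+1$. *)

theory Defs
  imports Complex_Main "HOL-Combinatorics.Permutations"
begin

text \<open>Vectors of R^n are represented as functions nat => real, coordinates 1..n
  (they vanish outside {1..n} for all vectors built below).\<close>

definition eps :: "nat \<Rightarrow> nat \<Rightarrow> real" where
  "eps i = (\<lambda>j. if j = i then 1 else 0)"

definition ip :: "nat \<Rightarrow> (nat \<Rightarrow> real) \<Rightarrow> (nat \<Rightarrow> real) \<Rightarrow> real" where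
  "ip n v w = (\<Sum>k=1..n. v k * w k)"

definition epsbar :: "nat \<Rightarrow> nat \<Rightarrow> nat \<Rightarrow> real" where
  "epsbar n i = (\<lambda>k. eps i k - (1 / real n) * (\<Sum>j=1..n. eps j k))"

definition in_P :: "nat \<Rightarrow> (nat \<Rightarrow> real) \<Rightarrow> bool" where
  "in_P n v \<longleftrightarrow> (\<exists>a :: nat \<Rightarrow> int. v = (\<lambda>k. \<Sum>i=1..n. of_int (a i) * epsbar n i k))"

definition sroot :: "nat \<Rightarrow> nat \<Rightarrow> real" where
  "sroot i = (\<lambda>k. eps i k - eps (Suc i) k)"

definition theta :: "nat \<Rightarrow> nat \<Rightarrow> real" where
  "theta n = (\<lambda>k. \<Sum>i=1..n-1. sroot i k)"

definition is_simple_root :: "nat \<Rightarrow> (nat \<Rightarrow> real) \<Rightarrow> bool" where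
  "is_simple_root n a \<longleftrightarrow> (\<exists>i. 1 \<le> i \<and> i \<le> n - 1 \<and> a = sroot i)"

definition posroot :: "nat \<Rightarrow> (nat \<Rightarrow> real) \<Rightarrow> bool" where
  "posroot n a \<longleftrightarrow> (\<exists>i j. 1 \<le> i \<and> i < j \<and> j \<le> n \<and> a = (\<lambda>k. eps i k - eps j k))"

definition rootcomb :: "nat \<Rightarrow> (nat \<Rightarrow> int) \<Rightarrow> nat \<Rightarrow> real" where
  "rootcomb n c = (\<lambda>k. \<Sum>i=1..n-1. of_int (c i) * sroot i k)"

text \<open>Permutation action: sigma eps_i = eps_(sigma i).\<close>
definition act :: "(nat \<Rightarrow> nat) \<Rightarrow> (nat \<Rightarrow> real) \<Rightarrow> nat \<Rightarrow> real" where
  "act \<sigma> v = (\<lambda>j. v (inv \<sigma> j))"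

definition perm_len :: "nat \<Rightarrow> (nat \<Rightarrow> nat) \<Rightarrow> nat" where
  "perm_len n \<sigma> = card {(i, j). 1 \<le> i \<and> i < j \<and> j \<le> n \<and> \<sigma> j < \<sigma> i}"

definition in_WLam :: "nat \<Rightarrow> nat \<Rightarrow> (nat \<Rightarrow> real) \<Rightarrow> (nat \<Rightarrow> real) \<Rightarrow> bool" where
  "in_WLam n r \<Lambda> l \<longleftrightarrow>
     (\<exists>\<sigma> c. \<sigma> permutes {1..n} \<and> l = (\<lambda>k. act \<sigma> \<Lambda> k + real r * rootcomb n c k))"

text \<open>deg (sigma Lambda + r gamma) = l(sigma) - 2|gamma| (well defined by uniqueness).\<close>
definition deg :: "nat \<Rightarrow> nat \<Rightarrow> (nat \<Rightarrow> real) \<Rightarrow> (nat \<Rightarrow> real) \<Rightarrow> int" where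
  "deg n r \<Lambda> l = (THE d. \<exists>\<sigma> c. \<sigma> permutes {1..n} \<and> l = (\<lambda>k. act \<sigma> \<Lambda> k + real r * rootcomb n c k)
        \<and> d = int (perm_len n \<sigma>) - 2 * (\<Sum>i=1..n-1. c i))"

definition mval :: "nat \<Rightarrow> nat \<Rightarrow> (nat \<Rightarrow> real) \<Rightarrow> (nat \<Rightarrow> real) \<Rightarrow> int" where
  "mval n r l a = (THE m :: int. 0 < m \<and> m < int r \<and>
      (\<exists>k :: int. ip n l a = of_int m + of_int (int r * k)))"

definition refl :: "nat \<Rightarrow> nat \<Rightarrow> (nat \<Rightarrow> real) \<Rightarrow> (nat \<Rightarrow> real) \<Rightarrow> nat \<Rightarrow> real" where
  "refl n r l a = (\<lambda>k. l k - of_int (mval n r l a) * a k)"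

definition admissible :: "nat \<Rightarrow> nat \<Rightarrow> (nat \<Rightarrow> real) \<Rightarrow> (nat \<Rightarrow> real) \<Rightarrow> (nat \<Rightarrow> real) \<Rightarrow> bool" where
  "admissible n r \<Lambda> l a \<longleftrightarrow> deg n r \<Lambda> (refl n r l a) = deg n r \<Lambda> l + 1"

end

theory Submission
  imports Defs "HOL-Combinatorics.Permutations"
begin

definition rt :: "nat \<Rightarrow> nat \<Rightarrow> nat \<Rightarrow> real" where
  "rt i j = (\<lambda>k. eps i k - eps j k)"

lemma sum_eps: "finite A \<Longrightarrow> (\<Sum>k\<in>A. v k * eps i k) = (if i \<in> A then v i else 0)"
proof -
  assume f: "finite A"
  have "(\<Sum>k\<in>A. v k * eps i k) = (\<Sum>k\<in>A. if k = i then v k else 0)"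
    by (rule sum.cong) (auto simp: eps_def)
  then show ?thesis using f by (simp add: sum.delta')
qed

lemma ip_root:
  assumes "i \<in> {1..n}" "j \<in> {1..n}"
  shows "ip n v (rt i j) = v i - v j"
proof -
  have "ip n v (rt i j) = (\<Sum>k=1..n. v k * eps i k) - (\<Sum>k=1..n. v k * eps j k)"
    unfolding ip_def rt_def by (simp add: right_diff_distrib sum_subtractf)
  also have "\<dots> = v i - v j" using assms by (simp add: sum_eps)
  finally show ?thesis .
qed

locale LS =
  fixes n r :: nat and \<Lambda> :: "nat \<Rightarrow> real"
  assumes n2: "n \<ge> 2" and rn: "r \<ge> n + 2" and inP: "in_P n \<Lambda>"
    and pos: "\<forall>i. 1 \<le> i \<and> i \<le> n - 1 \<longrightarrow> ip n \<Lambda> (sroot i) > 0"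
    and th: "ip n \<Lambda> (theta n) < real r"
begin

lemma r_pos: "r > 0" using rn by simp

lemma Lam_form: "\<exists>a::nat\<Rightarrow>int. \<exists>C. \<forall>k\<in>{1..n}. \<Lambda> k = of_int (a k) - C"
proof -
  obtain a :: "nat \<Rightarrow> int" where a: "\<Lambda> = (\<lambda>k. \<Sum>i=1..n. of_int (a i) * epsbar n i k)"
    using inP unfolding in_P_def by blast
  have "\<Lambda> k = of_int (a k) - (\<Sum>i=1..n. of_int (a i)) / real n" if k: "k \<in> {1..n}" for k
  proof -
    have s1: "(\<Sum>j=1..n. eps j k) = 1" using k unfolding eps_def by (simp add: sum.delta')
    have "\<Lambda> k = (\<Sum>i=1..n. of_int (a i) * eps i k - of_int (a i) * (1 / real n))"
      unfolding a epsbar_def s1 by (simp add: right_diff_distrib)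
    also have "\<dots> = (\<Sum>i=1..n. of_int (a i) * eps i k) - (\<Sum>i=1..n. of_int (a i)) / real n"
      by (simp add: sum_subtractf sum_divide_distrib)
    also have "(\<Sum>i=1..n. of_int (a i) * eps i k) = of_int (a k)"
      using k unfolding eps_def by (simp add: sum.delta' if_distrib cong: if_cong)
    finally show ?thesis .
  qed
  then show ?thesis by blast
qed

definition Dz :: "nat \<Rightarrow> nat \<Rightarrow> int" where "Dz p q = \<lfloor>\<Lambda> p - \<Lambda> q\<rfloor>"

lemma Dz: assumes "p \<in> {1..n}" "q \<in> {1..n}" shows "\<Lambda> p - \<Lambda> q = of_int (Dz p q)"
proof -
  obtain a :: "nat \<Rightarrow> int" and C where a: "\<forall>k\<in>{1..n}. \<Lambda> k = of_int (a k) - C"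
    using Lam_form by blast
  have "\<Lambda> p - \<Lambda> q = of_int (a p - a q)" using a assms by simp
  then show ?thesis unfolding Dz_def by simp
qed

lemma Lam_step: assumes "1 \<le> i" "i \<le> n - 1" shows "\<Lambda> (Suc i) < \<Lambda> i"
proof -
  have "ip n \<Lambda> (sroot i) = \<Lambda> i - \<Lambda> (Suc i)"
    using ip_root[of i n "Suc i" \<Lambda>] assms unfolding sroot_def rt_def by simp
  then show ?thesis using pos assms by auto
qed

lemma Lam_mono_aux: "1 \<le> p \<Longrightarrow> p < q \<Longrightarrow> q \<le> n \<Longrightarrow> \<Lambda> q < \<Lambda> p"
proof (induction q)
  case 0 then show ?case by simp
next
  case (Suc q)
  have st: "\<Lambda> (Suc q) < \<Lambda> q" using Lam_step[of q] Suc.prems by simp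
  show ?case
  proof (cases "p = q")
    case True then show ?thesis using st by simp
  next
    case False then show ?thesis using Suc st by simp
  qed
qed

lemma Lam_mono: "p \<in> {1..n} \<Longrightarrow> q \<in> {1..n} \<Longrightarrow> p < q \<Longrightarrow> \<Lambda> q < \<Lambda> p"
  using Lam_mono_aux by auto

lemma Lam_le: "p \<in> {1..n} \<Longrightarrow> q \<in> {1..n} \<Longrightarrow> p \<le> q \<Longrightarrow> \<Lambda> q \<le> \<Lambda> p"
  using Lam_mono by (cases "p = q") (auto intro: less_imp_le)

lemma theta_eq: "theta n = rt 1 n"
proof
  fix k
  have "theta n k = (\<Sum>i=1..n-1. eps i k - eps (Suc i) k)" unfolding theta_def sroot_def by simp
  also have "\<dots> = - (\<Sum>i=1..n-1. eps (Suc i) k - eps i k)" by (simp add: sum_negf[symmetric])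
  also have "(\<Sum>i=1..n-1. eps (Suc i) k - eps i k) = eps (Suc (n-1)) k - eps 1 k"
    by (rule sum_Suc_diff) (use n2 in simp)
  also have "Suc (n-1) = n" using n2 by simp
  finally show "theta n k = rt 1 n k" unfolding rt_def by simp
qed

lemma Lam_wide: assumes "p \<in> {1..n}" "q \<in> {1..n}" shows "\<Lambda> p - \<Lambda> q < real r"
proof -
  have "ip n \<Lambda> (theta n) = \<Lambda> 1 - \<Lambda> n" unfolding theta_eq using n2 by (simp add: ip_root)
  moreover have "\<Lambda> p \<le> \<Lambda> 1" using Lam_le[of 1 p] assms n2 by simp
  moreover have "\<Lambda> n \<le> \<Lambda> q" using Lam_le[of q n] assms n2 by simp
  ultimately show ?thesis using th by simp
qed

end

definition dd :: "(nat \<Rightarrow> nat) \<Rightarrow> nat \<Rightarrow> nat \<Rightarrow> int" where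
  "dd \<tau> i j = (if \<tau> j < \<tau> i then 1 else 0)"
definition ind :: "nat \<Rightarrow> nat \<Rightarrow> int" where "ind i u = (if u = i then 1 else 0)"

lemma sum_eps2: "finite A \<Longrightarrow> (\<Sum>i\<in>A. w i * eps i k) = (if k \<in> A then w k else 0)"
proof -
  assume f: "finite A"
  have "(\<Sum>i\<in>A. w i * eps i k) = (\<Sum>i\<in>A. if i = k then w i else 0)"
    by (rule sum.cong) (auto simp: eps_def)
  then show ?thesis using f by (simp add: sum.delta)
qed

lemma sum_eps3: "finite A \<Longrightarrow> (\<Sum>i\<in>A. w i * eps (Suc i) k) = (if 1 \<le> k \<and> k - 1 \<in> A then w (k - 1) else 0)"
proof -
  assume f: "finite A"
  have "(\<Sum>i\<in>A. w i * eps (Suc i) k) = (\<Sum>i\<in>A. if 1 \<le> k \<and> i = k - 1 then w i else 0)"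
    by (rule sum.cong) (auto simp: eps_def)
  also have "\<dots> = (if 1 \<le> k then (\<Sum>i\<in>A. if i = k - 1 then w i else 0) else 0)" by simp
  finally show ?thesis using f by (simp add: sum.delta)
qed

context LS begin

definition hc :: "(nat \<Rightarrow> int) \<Rightarrow> nat \<Rightarrow> int" where
  "hc c k = (if 1 \<le> k \<and> k \<le> n - 1 then c k else 0) - (if 2 \<le> k \<and> k \<le> n then c (k - 1) else 0)"

lemma rootcomb_hc: "rootcomb n c k = of_int (hc c k)"
proof -
  have "rootcomb n c k = (\<Sum>i=1..n-1. of_int (c i) * eps i k) - (\<Sum>i=1..n-1. of_int (c i) * eps (Suc i) k)"
    unfolding rootcomb_def sroot_def by (simp add: right_diff_distrib sum_subtractf)
  also have "\<dots> = (if k \<in> {1..n-1} then of_int (c k) else 0) - (if 1 \<le> k \<and> k - 1 \<in> {1..n-1} then of_int (c (k-1)) else 0)"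
    by (simp only: sum_eps2 sum_eps3 finite_atLeastAtMost)
  also have "\<dots> = of_int (hc c k)" unfolding hc_def using n2 by auto
  finally show ?thesis .
qed

definition E :: "(nat \<Rightarrow> nat) \<Rightarrow> (nat \<Rightarrow> int) \<Rightarrow> nat \<Rightarrow> real" where
  "E \<tau> H = (\<lambda>k. \<Lambda> (\<tau> k) + real r * of_int (H k))"

lemma rep_E: "(\<lambda>k. act \<sigma> \<Lambda> k + real r * rootcomb n c k) = E (inv \<sigma>) (hc c)"
  unfolding E_def act_def by (simp add: rootcomb_hc)

lemma inWL: assumes "in_WLam n r \<Lambda> l" shows "\<exists>\<tau> c. \<tau> permutes {1..n} \<and> l = E \<tau> (hc c)"
proof -
  obtain \<sigma> c where s: "\<sigma> permutes {1..n}" "l = (\<lambda>k. act \<sigma> \<Lambda> k + real r * rootcomb n c k)"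
    using assms unfolding in_WLam_def by blast
  show ?thesis using s permutes_inv[OF s(1)] rep_E by blast
qed

lemma E_inj:
  assumes "\<tau>1 permutes {1..n}" "\<tau>2 permutes {1..n}" "k \<in> {1..n}" "E \<tau>1 H1 k = E \<tau>2 H2 k"
  shows "\<tau>1 k = \<tau>2 k \<and> H1 k = H2 k"
proof -
  have k1: "\<tau>1 k \<in> {1..n}" using permutes_in_image[OF assms(1)] assms(3) by simp
  have k2: "\<tau>2 k \<in> {1..n}" using permutes_in_image[OF assms(2)] assms(3) by simp
  have eq: "\<Lambda> (\<tau>1 k) - \<Lambda> (\<tau>2 k) = real r * of_int (H2 k - H1 k)"
    using assms(4) unfolding E_def by (simp add: algebra_simps)
  have t: "\<tau>1 k = \<tau>2 k"
  proof (rule ccontr)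
    assume ne: "\<tau>1 k \<noteq> \<tau>2 k"
    have a1: "\<bar>\<Lambda> (\<tau>1 k) - \<Lambda> (\<tau>2 k)\<bar> < real r"
      using Lam_wide[OF k1 k2] Lam_wide[OF k2 k1] by linarith
    have a2: "\<Lambda> (\<tau>1 k) \<noteq> \<Lambda> (\<tau>2 k)"
      using Lam_mono[OF k1 k2] Lam_mono[OF k2 k1] ne by (cases "\<tau>1 k < \<tau>2 k") auto
    have "H2 k - H1 k \<noteq> 0" using eq a2 by auto
    then have i1: "\<bar>H2 k - H1 k\<bar> \<ge> 1" by linarith
    have h1: "(1::real) \<le> \<bar>of_int (H2 k - H1 k)\<bar>" using i1 by (metis of_int_1_le_iff of_int_abs)
    have "real r * 1 \<le> real r * \<bar>of_int (H2 k - H1 k)\<bar>" using h1 by (intro mult_left_mono) auto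
    then have "\<bar>real r * of_int (H2 k - H1 k)\<bar> \<ge> real r" by (simp add: abs_mult)
    then show False using a1 eq by simp
  qed
  then have "real r * of_int (H2 k - H1 k) = 0" using eq by simp
  then show ?thesis using t r_pos by simp
qed

lemma mval_char:
  assumes "ip n l a = of_int z" "0 < m" "m < int r" "int r dvd (z - m)"
  shows "mval n r l a = m"
  unfolding mval_def
proof (rule the_equality)
  obtain q where q: "z - m = int r * q" using assms(4) by blast
  show "0 < m \<and> m < int r \<and> (\<exists>k. ip n l a = of_int m + of_int (int r * k))"
    using assms(1-3) q by (intro conjI exI[of _ q]) (simp_all add: algebra_simps, linarith?)
next
  fix m' assume h: "0 < m' \<and> m' < int r \<and> (\<exists>k. ip n l a = of_int m' + of_int (int r * k))"
  then obtain k where k: "ip n l a = of_int m' + of_int (int r * k)" by blast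
  have zk: "z = m' + int r * k" using k assms(1) by (metis of_int_add of_int_eq_iff)
  obtain q where q: "z - m = int r * q" using assms(4) by blast
  have "m' - m = int r * (q - k)" using zk q by (simp add: algebra_simps)
  moreover have "\<bar>m' - m\<bar> < int r" using h assms by auto
  ultimately have "q - k = 0"
  proof -
    assume a: "m' - m = int r * (q - k)" "\<bar>m' - m\<bar> < int r"
    show "q - k = 0"
    proof (rule ccontr)
      assume "q - k \<noteq> 0"
      then have "\<bar>q - k\<bar> \<ge> 1" by linarith
      then have "int r * \<bar>q - k\<bar> \<ge> int r * 1" by (intro mult_left_mono) auto
      then show False using a by (simp add: abs_mult)
    qed
  qed
  then show "m' = m" using \<open>m' - m = _\<close> by simp
qed

end

definition cup :: "(nat \<Rightarrow> int) \<Rightarrow> nat \<Rightarrow> nat \<Rightarrow> int \<Rightarrow> nat \<Rightarrow> int" where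
  "cup c i j \<delta> = (\<lambda>t. if i \<le> t \<and> t < j then c t - \<delta> else c t)"

lemma perm_len_inv:
  assumes s: "\<sigma> permutes {1..n}"
  shows "perm_len n (inv \<sigma>) = perm_len n \<sigma>"
proof -
  let ?\<tau> = "inv \<sigma>"
  let ?A = "{(i, j). 1 \<le> i \<and> i < j \<and> j \<le> n \<and> ?\<tau> j < ?\<tau> i}"
  let ?B = "{(i, j). 1 \<le> i \<and> i < j \<and> j \<le> n \<and> \<sigma> j < \<sigma> i}"
  have t: "?\<tau> permutes {1..n}" using permutes_inv[OF s] .
  have st: "\<sigma> (?\<tau> x) = x" "?\<tau> (\<sigma> x) = x" for x using permutes_inverses[OF s] by auto
  have ins: "x \<in> {1..n} \<Longrightarrow> \<sigma> x \<in> {1..n}" for x using permutes_in_image[OF s] by simp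
  have int: "x \<in> {1..n} \<Longrightarrow> ?\<tau> x \<in> {1..n}" for x using permutes_in_image[OF t] by simp
  have "bij_betw (\<lambda>(i,j). (?\<tau> j, ?\<tau> i)) ?A ?B"
  proof (rule bij_betw_byWitness[where f'="\<lambda>(a,b). (\<sigma> b, \<sigma> a)"])
    show "\<forall>x\<in>?A. (\<lambda>(a,b). (\<sigma> b, \<sigma> a)) ((\<lambda>(i,j). (?\<tau> j, ?\<tau> i)) x) = x" by (auto simp: st)
    show "\<forall>x\<in>?B. (\<lambda>(i,j). (?\<tau> j, ?\<tau> i)) ((\<lambda>(a,b). (\<sigma> b, \<sigma> a)) x) = x" by (auto simp: st)
    show "(\<lambda>(i,j). (?\<tau> j, ?\<tau> i)) ` ?A \<subseteq> ?B"
    proof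
      fix y assume "y \<in> (\<lambda>(i,j). (?\<tau> j, ?\<tau> i)) ` ?A"
      then obtain i j where y: "y = (?\<tau> j, ?\<tau> i)" "1 \<le> i" "i < j" "j \<le> n" "?\<tau> j < ?\<tau> i" by auto
      have "?\<tau> j \<in> {1..n}" "?\<tau> i \<in> {1..n}" using int y by auto
      then show "y \<in> ?B" using y by (auto simp: st)
    qed
    show "(\<lambda>(a,b). (\<sigma> b, \<sigma> a)) ` ?B \<subseteq> ?A"
    proof
      fix y assume "y \<in> (\<lambda>(a,b). (\<sigma> b, \<sigma> a)) ` ?B"
      then obtain i j where y: "y = (\<sigma> j, \<sigma> i)" "1 \<le> i" "i < j" "j \<le> n" "\<sigma> j < \<sigma> i" by auto
      have "\<sigma> j \<in> {1..n}" "\<sigma> i \<in> {1..n}" using ins y by auto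
      then show "y \<in> ?A" using y by (auto simp: st)
    qed
  qed
  then have "card ?A = card ?B" by (rule bij_betw_same_card)
  then show ?thesis unfolding perm_len_def .
qed

context LS begin

lemma mval_E:
  assumes t: "\<tau> permutes {1..n}" and ij: "i \<in> {1..n}" "j \<in> {1..n}" "i \<noteq> j"
  shows "mval n r (E \<tau> H) (rt i j) = Dz (\<tau> i) (\<tau> j) + int r * dd \<tau> i j"
proof (rule mval_char)
  have ti: "\<tau> i \<in> {1..n}" "\<tau> j \<in> {1..n}" using permutes_in_image[OF t] ij by auto
  have ne: "\<tau> i \<noteq> \<tau> j" using permutes_inj[OF t] ij by (auto dest: injD)
  have D: "\<Lambda> (\<tau> i) - \<Lambda> (\<tau> j) = of_int (Dz (\<tau> i) (\<tau> j))" using Dz ti by simp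
  have "ip n (E \<tau> H) (rt i j) = E \<tau> H i - E \<tau> H j" by (rule ip_root[OF ij(1,2)])
  also have "\<dots> = (\<Lambda> (\<tau> i) - \<Lambda> (\<tau> j)) + real r * (of_int (H i) - of_int (H j))"
    unfolding E_def by (simp add: algebra_simps)
  finally show "ip n (E \<tau> H) (rt i j) = of_int (Dz (\<tau> i) (\<tau> j) + int r * (H i - H j))"
    using D by simp
  show "int r dvd (Dz (\<tau> i) (\<tau> j) + int r * (H i - H j) - (Dz (\<tau> i) (\<tau> j) + int r * dd \<tau> i j))"
    by (simp add: algebra_simps)
  have w1: "\<Lambda> (\<tau> i) - \<Lambda> (\<tau> j) < real r" "\<Lambda> (\<tau> j) - \<Lambda> (\<tau> i) < real r" using Lam_wide ti by auto
  have "0 < Dz (\<tau> i) (\<tau> j) + int r * dd \<tau> i j \<and> Dz (\<tau> i) (\<tau> j) + int r * dd \<tau> i j < int r"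
  proof (cases "\<tau> j < \<tau> i")
    case True
    then have "\<Lambda> (\<tau> i) < \<Lambda> (\<tau> j)" using Lam_mono ti by auto
    then show ?thesis using True D w1 unfolding dd_def by (simp; linarith?)
  next
    case False
    then have "\<tau> i < \<tau> j" using ne by simp
    then have "\<Lambda> (\<tau> j) < \<Lambda> (\<tau> i)" using Lam_mono ti by auto
    then show ?thesis using False D w1 unfolding dd_def by (simp; linarith?)
  qed
  then show "0 < Dz (\<tau> i) (\<tau> j) + int r * dd \<tau> i j" "Dz (\<tau> i) (\<tau> j) + int r * dd \<tau> i j < int r" by auto
qed

lemma refl_E:
  assumes t: "\<tau> permutes {1..n}" and ij: "i \<in> {1..n}" "j \<in> {1..n}" "i \<noteq> j"
  shows "refl n r (E \<tau> H) (rt i j) = E (\<tau> \<circ> transpose i j) (\<lambda>u. H u - dd \<tau> i j * (ind i u - ind j u))"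
proof
  fix u
  have ti: "\<tau> i \<in> {1..n}" "\<tau> j \<in> {1..n}" using permutes_in_image[OF t] ij by auto
  have D: "\<Lambda> (\<tau> i) - \<Lambda> (\<tau> j) = of_int (Dz (\<tau> i) (\<tau> j))" using Dz ti by simp
  show "refl n r (E \<tau> H) (rt i j) u = E (\<tau> \<circ> transpose i j) (\<lambda>u. H u - dd \<tau> i j * (ind i u - ind j u)) u"
    unfolding refl_def mval_E[OF assms]
    using D ij(3) by (auto simp: E_def rt_def eps_def ind_def algebra_simps)
qed

lemma hc_inj:
  assumes "\<forall>k\<in>{1..n}. hc c k = hc c' k"
  shows "1 \<le> t \<Longrightarrow> t \<le> n - 1 \<Longrightarrow> c t = c' t"
proof (induction t)
  case 0 then show ?case by simp
next
  case (Suc t)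
  show ?case
  proof (cases "t = 0")
    case True
    have "1 \<le> n - 1" using n2 by simp
    then show ?thesis using assms[rule_format, of 1] n2 True unfolding hc_def by simp
  next
    case False
    have "hc c (Suc t) = hc c' (Suc t)" using assms Suc.prems by auto
    have a: "Suc t \<le> n" "Suc t - 1 = t" "1 \<le> t" "t \<le> n - 1" using Suc.prems False by auto
    then have "c t = c' t" using Suc.IH by simp
    then show ?thesis using \<open>hc c (Suc t) = hc c' (Suc t)\<close> a Suc.prems unfolding hc_def by simp
  qed
qed

lemma deg_E:
  assumes t: "\<tau> permutes {1..n}"
  shows "deg n r \<Lambda> (E \<tau> (hc c)) = int (perm_len n \<tau>) - 2 * (\<Sum>t=1..n-1. c t)"
  unfolding deg_def
proof (rule the_equality)
  have "E \<tau> (hc c) = (\<lambda>k. act (inv \<tau>) \<Lambda> k + real r * rootcomb n c k)"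
    using rep_E[of "inv \<tau>" c] permutes_inv_inv[OF t] by simp
  moreover have "perm_len n (inv \<tau>) = perm_len n \<tau>" using perm_len_inv[OF t] .
  ultimately show "\<exists>\<sigma> c'. \<sigma> permutes {1..n} \<and> E \<tau> (hc c) = (\<lambda>k. act \<sigma> \<Lambda> k + real r * rootcomb n c' k) \<and>
      int (perm_len n \<tau>) - 2 * (\<Sum>t=1..n-1. c t) = int (perm_len n \<sigma>) - 2 * (\<Sum>i = 1..n - 1. c' i)"
    using permutes_inv[OF t] by metis
next
  fix d assume "\<exists>\<sigma> c'. \<sigma> permutes {1..n} \<and> E \<tau> (hc c) = (\<lambda>k. act \<sigma> \<Lambda> k + real r * rootcomb n c' k) \<and>
      d = int (perm_len n \<sigma>) - 2 * (\<Sum>i = 1..n - 1. c' i)"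
  then obtain \<sigma> c' where s: "\<sigma> permutes {1..n}" and e: "E \<tau> (hc c) = E (inv \<sigma>) (hc c')"
    and d: "d = int (perm_len n \<sigma>) - 2 * (\<Sum>i = 1..n - 1. c' i)"
    using rep_E by metis
  have si: "inv \<sigma> permutes {1..n}" using permutes_inv[OF s] .
  have pt: "\<forall>k\<in>{1..n}. \<tau> k = inv \<sigma> k \<and> hc c k = hc c' k"
    using E_inj[OF t si] e by metis
  have "\<tau> = inv \<sigma>"
  proof
    fix k show "\<tau> k = inv \<sigma> k"
      using pt permutes_not_in[OF t, of k] permutes_not_in[OF si, of k] by (cases "k \<in> {1..n}") auto
  qed
  then have pl: "perm_len n \<sigma> = perm_len n \<tau>" using perm_len_inv[OF s] by simp
  have "(\<Sum>i = 1..n - 1. c' i) = (\<Sum>i = 1..n - 1. c i)"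
    by (rule sum.cong) (use hc_inj[of c c'] pt in auto)
  then show "d = int (perm_len n \<tau>) - 2 * (\<Sum>t=1..n-1. c t)" using d pl by simp
qed

lemma hc_cup:
  assumes "1 \<le> i" "i < j" "j \<le> n"
  shows "hc (cup c i j \<delta>) u = hc c u - \<delta> * (ind i u - ind j u)"
  using assms unfolding hc_def cup_def ind_def by auto

lemma sum_cup:
  assumes "1 \<le> i" "i < j" "j \<le> n"
  shows "(\<Sum>t=1..n-1. cup c i j \<delta> t) = (\<Sum>t=1..n-1. c t) - \<delta> * int (j - i)"
proof -
  have "(\<Sum>t=1..n-1. cup c i j \<delta> t) = (\<Sum>t=1..n-1. c t - (if t \<in> {i..<j} then \<delta> else 0))"
    unfolding cup_def by (rule sum.cong) auto
  also have "\<dots> = (\<Sum>t=1..n-1. c t) - (\<Sum>t=1..n-1. (if t \<in> {i..<j} then \<delta> else 0))"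
    by (simp add: sum_subtractf)
  also have "(\<Sum>t=1..n-1. (if t \<in> {i..<j} then \<delta> else 0)) = (\<Sum>t\<in>{i..<j}. \<delta>)"
  proof -
    have "{1..n-1} \<inter> {i..<j} = {i..<j}" using assms by auto
    moreover have "(\<Sum>t=1..n-1. (if t \<in> {i..<j} then \<delta> else 0)) = sum (\<lambda>_. \<delta>) ({1..n-1} \<inter> {i..<j})"
      by (simp only: sum.inter_restrict finite_atLeastAtMost)
    ultimately show ?thesis by simp
  qed
  also have "\<dots> = \<delta> * int (j - i)" by simp
  finally show ?thesis .
qed

lemma refl_E2:
  assumes t: "\<tau> permutes {1..n}" and ij: "1 \<le> i" "i < j" "j \<le> n"
  shows "refl n r (E \<tau> (hc c)) (rt i j) = E (\<tau> \<circ> transpose i j) (hc (cup c i j (dd \<tau> i j)))"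
proof -
  have "hc (cup c i j (dd \<tau> i j)) = (\<lambda>u. hc c u - dd \<tau> i j * (ind i u - ind j u))"
    using hc_cup[OF ij] by (simp add: fun_eq_iff)
  then show ?thesis using refl_E[OF t, of i j "hc c"] ij by simp
qed

end

definition Inv :: "nat \<Rightarrow> (nat \<Rightarrow> nat) \<Rightarrow> int" where
  "Inv n \<tau> = (\<Sum>a\<in>{1..n}. \<Sum>b\<in>{1..n}. of_bool (a < b \<and> \<tau> b < \<tau> a))"

lemma perm_len_Inv: "int (perm_len n \<tau>) = Inv n \<tau>"
proof -
  have "Inv n \<tau> = (\<Sum>x\<in>{1..n}\<times>{1..n}. of_bool (fst x < snd x \<and> \<tau> (snd x) < \<tau> (fst x)))"
    unfolding Inv_def sum.cartesian_product by (simp only: split_def)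
  also have "\<dots> = int (card (({1..n}\<times>{1..n}) \<inter> {x. fst x < snd x \<and> \<tau> (snd x) < \<tau> (fst x)}))"
    by (subst sum_of_bool_eq) auto
  also have "({1..n}\<times>{1..n}) \<inter> {x. fst x < snd x \<and> \<tau> (snd x) < \<tau> (fst x)} =
      {(i, j). 1 \<le> i \<and> i < j \<and> j \<le> n \<and> \<tau> j < \<tau> i}" by auto
  finally show ?thesis unfolding perm_len_def by simp
qed

lemma reindex2:
  assumes "p permutes S"
  shows "(\<Sum>a\<in>S. \<Sum>b\<in>S. f a b) = (\<Sum>a\<in>S. \<Sum>b\<in>S. f (p a) (p b))"
proof -
  have "(\<Sum>a\<in>S. \<Sum>b\<in>S. f a b) = (\<Sum>a\<in>S. \<Sum>b\<in>S. f (p a) b)"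
    using sum.permute[OF assms, of "\<lambda>a. \<Sum>b\<in>S. f a b"] by (simp add: comp_def)
  also have "\<dots> = (\<Sum>a\<in>S. \<Sum>b\<in>S. f (p a) (p b))"
  proof (rule sum.cong[OF refl])
    fix a show "(\<Sum>b\<in>S. f (p a) b) = (\<Sum>b\<in>S. f (p a) (p b))"
      using sum.permute[OF assms, of "f (p a)"] by (simp add: comp_def)
  qed
  finally show ?thesis .
qed

lemma sum_split2:
  assumes "finite S" "i \<in> S" "j \<in> S" "i \<noteq> j"
  shows "sum f S = f i + f j + sum f (S - {i,j})"
proof -
  have "S = insert i (insert j (S - {i,j}))" using assms by auto
  then have "sum f S = sum f (insert i (insert j (S - {i,j})))" by simp
  also have "\<dots> = f i + f j + sum f (S - {i,j})" using assms by (simp add: add.assoc)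
  finally show ?thesis .
qed

lemma four_part:
  fixes F :: "nat \<Rightarrow> nat \<Rightarrow> int"
  assumes "finite S" "i \<in> S" "j \<in> S" "i \<noteq> j"
    and z: "\<And>a b. a \<notin> {i,j} \<Longrightarrow> b \<notin> {i,j} \<Longrightarrow> F a b = 0"
  shows "(\<Sum>a\<in>S. \<Sum>b\<in>S. F a b) = F i i + F i j + F j i + F j j + (\<Sum>k\<in>S-{i,j}. F i k + F j k + F k i + F k j)"
proof -
  have row: "(\<Sum>b\<in>S. F a b) = F a i + F a j + (\<Sum>b\<in>S-{i,j}. F a b)" for a
    using sum_split2[OF assms(1-4)] .
  have zr: "(\<Sum>b\<in>S-{i,j}. F a b) = 0" if "a \<in> S - {i,j}" for a
    using z that by (intro sum.neutral) auto
  have "(\<Sum>a\<in>S. \<Sum>b\<in>S. F a b) = (\<Sum>b\<in>S. F i b) + (\<Sum>b\<in>S. F j b) + (\<Sum>a\<in>S-{i,j}. \<Sum>b\<in>S. F a b)"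
    using sum_split2[OF assms(1-4)] .
  also have "(\<Sum>a\<in>S-{i,j}. \<Sum>b\<in>S. F a b) = (\<Sum>a\<in>S-{i,j}. F a i + F a j)"
    by (rule sum.cong) (use row zr in auto)
  also have "(\<Sum>b\<in>S. F i b) = F i i + F i j + (\<Sum>b\<in>S-{i,j}. F i b)" using row .
  also have "(\<Sum>b\<in>S. F j b) = F j i + F j j + (\<Sum>b\<in>S-{i,j}. F j b)" using row .
  finally show ?thesis by (simp add: sum.distrib algebra_simps)
qed

definition bad :: "(nat \<Rightarrow> nat) \<Rightarrow> nat \<Rightarrow> nat \<Rightarrow> nat \<Rightarrow> bool" where
  "bad \<tau> i j k = (if \<tau> i < \<tau> j then \<tau> i < \<tau> k \<and> \<tau> k < \<tau> j else \<not> (\<tau> j < \<tau> k \<and> \<tau> k < \<tau> i))"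

definition badset :: "(nat \<Rightarrow> nat) \<Rightarrow> nat \<Rightarrow> nat \<Rightarrow> nat set" where
  "badset \<tau> i j = {k. i < k \<and> k < j \<and> bad \<tau> i j k}"

lemma Inv_diff:
  assumes t: "\<tau> permutes {1..n}" and ij: "1 \<le> i" "i < j" "j \<le> n"
  shows "Inv n (\<tau> \<circ> transpose i j) - Inv n \<tau> + 2 * dd \<tau> i j * int (j - i) = 1 + 2 * int (card (badset \<tau> i j))"
proof -
  let ?S = "{1..n}"
  let ?t = "transpose i j"
  have tp: "?t permutes ?S" using ij by (intro permutes_swap_id) auto
  have tt: "?t (?t x) = x" for x by simp
  have inj: "\<tau> x = \<tau> y \<longleftrightarrow> x = y" for x y using permutes_inj[OF t] by (auto dest: injD)
  define f where "f a b = (of_bool (a < b \<and> \<tau> (?t b) < \<tau> (?t a)) :: int)" for a b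
  have "Inv n (\<tau> \<circ> ?t) = (\<Sum>a\<in>?S. \<Sum>b\<in>?S. f a b)"
    unfolding Inv_def f_def by (simp del: sum_of_bool_eq)
  also have "\<dots> = (\<Sum>a\<in>?S. \<Sum>b\<in>?S. f (?t a) (?t b))" by (rule reindex2[OF tp])
  also have "\<dots> = (\<Sum>a\<in>?S. \<Sum>b\<in>?S. of_bool (?t a < ?t b \<and> \<tau> b < \<tau> a))"
    unfolding f_def by (simp del: sum_of_bool_eq)
  finally have e1: "Inv n (\<tau> \<circ> ?t) = (\<Sum>a\<in>?S. \<Sum>b\<in>?S. of_bool (?t a < ?t b \<and> \<tau> b < \<tau> a))" .
  define F where "F a b = (of_bool (?t a < ?t b \<and> \<tau> b < \<tau> a) - of_bool (a < b \<and> \<tau> b < \<tau> a) :: int)" for a b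
  have "Inv n (\<tau> \<circ> ?t) - Inv n \<tau> = (\<Sum>a\<in>?S. \<Sum>b\<in>?S. F a b)"
    unfolding e1 Inv_def[of n \<tau>] F_def by (simp add: sum_subtractf del: sum_of_bool_eq)
  also have "\<dots> = F i i + F i j + F j i + F j j + (\<Sum>k\<in>?S-{i,j}. F i k + F j k + F k i + F k j)"
    by (rule four_part) (use ij in \<open>auto simp: F_def\<close>)
  also have "F i i + F i j + F j i + F j j = of_bool (\<tau> i < \<tau> j) - of_bool (\<tau> j < \<tau> i)"
    using ij unfolding F_def by auto
  also have "(\<Sum>k\<in>?S-{i,j}. F i k + F j k + F k i + F k j) =
     (\<Sum>k\<in>?S-{i,j}. if \<tau> i < \<tau> j then 2 * of_bool (i < k \<and> k < j \<and> bad \<tau> i j k)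
        else 2 * of_bool (i < k \<and> k < j \<and> bad \<tau> i j k) - 2 * of_bool (i < k \<and> k < j))"
  proof (rule sum.cong)
    fix k assume k: "k \<in> ?S - {i,j}"
    have "\<tau> k \<noteq> \<tau> i" "\<tau> k \<noteq> \<tau> j" "\<tau> i \<noteq> \<tau> j" using k ij inj by auto
    then show "F i k + F j k + F k i + F k j = (if \<tau> i < \<tau> j then 2 * of_bool (i < k \<and> k < j \<and> bad \<tau> i j k)
        else 2 * of_bool (i < k \<and> k < j \<and> bad \<tau> i j k) - 2 * of_bool (i < k \<and> k < j))"
      using k ij unfolding F_def bad_def by (auto simp: transpose_def)
  qed simp
  finally have d: "Inv n (\<tau> \<circ> ?t) - Inv n \<tau> = of_bool (\<tau> i < \<tau> j) - of_bool (\<tau> j < \<tau> i) + 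
     (\<Sum>k\<in>?S-{i,j}. if \<tau> i < \<tau> j then 2 * of_bool (i < k \<and> k < j \<and> bad \<tau> i j k)
        else 2 * of_bool (i < k \<and> k < j \<and> bad \<tau> i j k) - 2 * of_bool (i < k \<and> k < j))" .
  have cb: "(\<Sum>k\<in>?S-{i,j}. of_bool (i < k \<and> k < j \<and> bad \<tau> i j k) :: int) = int (card (badset \<tau> i j))"
  proof -
    have "(?S-{i,j}) \<inter> {k. i < k \<and> k < j \<and> bad \<tau> i j k} = badset \<tau> i j" using ij unfolding badset_def by auto
    then show ?thesis by (subst sum_of_bool_eq) auto
  qed
  have cm: "(\<Sum>k\<in>?S-{i,j}. of_bool (i < k \<and> k < j) :: int) = int j - int i - 1"
  proof -
    have "(?S-{i,j}) \<inter> {k. i < k \<and> k < j} = {i<..<j}" using ij by auto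
    then show ?thesis using ij by (subst sum_of_bool_eq) auto
  qed
  have ne: "\<tau> i \<noteq> \<tau> j" using ij inj by auto
  show ?thesis
  proof (cases "\<tau> i < \<tau> j")
    case True
    then have "Inv n (\<tau> \<circ> ?t) - Inv n \<tau> = 1 + 2 * (\<Sum>k\<in>?S-{i,j}. of_bool (i < k \<and> k < j \<and> bad \<tau> i j k))"
      using d by (simp add: sum_distrib_left)
    then show ?thesis using True cb unfolding dd_def by simp
  next
    case False
    then have "\<tau> j < \<tau> i" using ne by simp
    then have "Inv n (\<tau> \<circ> ?t) - Inv n \<tau> = - 1 + 2 * (\<Sum>k\<in>?S-{i,j}. of_bool (i < k \<and> k < j \<and> bad \<tau> i j k))
        - 2 * (\<Sum>k\<in>?S-{i,j}. of_bool (i < k \<and> k < j))"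
      using d False by (simp add: sum_distrib_left sum_subtractf)
    then show ?thesis using False \<open>\<tau> j < \<tau> i\<close> cb cm ij unfolding dd_def by simp
  qed
qed

context LS begin

lemma deg_step:
  assumes t: "\<tau> permutes {1..n}" and ij: "1 \<le> i" "i < j" "j \<le> n"
  shows "deg n r \<Lambda> (refl n r (E \<tau> (hc c)) (rt i j)) = deg n r \<Lambda> (E \<tau> (hc c)) + 1 + 2 * int (card (badset \<tau> i j))"
proof -
  have tp: "\<tau> \<circ> transpose i j permutes {1..n}"
    using ij by (intro permutes_compose[OF _ t] permutes_swap_id) auto
  show ?thesis
    unfolding refl_E2[OF t ij] deg_E[OF tp] deg_E[OF t] sum_cup[OF ij] perm_len_Inv
    using Inv_diff[OF t ij] by (simp add: algebra_simps)
qed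

end

lemma moved: "(a::nat)<b \<Longrightarrow> c<d \<Longrightarrow> (a,b)\<noteq>(c,d) \<Longrightarrow> x\<in>{a,b,c,d} \<Longrightarrow> transpose a b (transpose c d x) \<noteq> x"
  by (auto simp: transpose_def)

lemma stepA0:
  fixes i j k l a b c d :: nat
  assumes "i<j" "k<l" "a<b" "c<d" "(i,j)\<noteq>(k,l)"
   and h: "\<And>u. u \<in> {i,j,k,l,a,b,c,d} \<Longrightarrow> transpose a b (transpose c d u) = transpose i j (transpose k l u)"
  shows "a \<in> {i,j,k,l} \<and> b \<in> {i,j,k,l} \<and> c \<in> {i,j,k,l} \<and> d \<in> {i,j,k,l}"
proof -
  have ne: "(a,b)\<noteq>(c,d)"
  proof
    assume "(a,b) = (c,d)"
    then have "transpose a b (transpose c d i) = i" by auto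
    moreover have "transpose i j (transpose k l i) \<noteq> i" using moved[of i j k l i] assms by auto
    ultimately show False using h[of i] by auto
  qed
  have "x \<in> {i,j,k,l}" if "x\<in>{a,b,c,d}" for x
  proof (rule ccontr)
    assume "x \<notin> {i,j,k,l}"
    then have "transpose i j (transpose k l x) = x" by auto
    moreover have "transpose a b (transpose c d x) \<noteq> x" using moved[of a b c d x] assms ne that by auto
    ultimately show False using h[of x] that by auto
  qed
  then show ?thesis by auto
qed

lemma pair3: "(a::nat) \<in> {p,q,s} \<Longrightarrow> b \<in> {p,q,s} \<Longrightarrow> a < b \<Longrightarrow> p < q \<Longrightarrow> q < s \<Longrightarrow> (a,b) \<in> {(p,q),(p,s),(q,s)}"
  by auto

lemma candP:
  fixes p q s a b c d i j k l :: nat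
  assumes o: "p<q" "q<s" "a<b" "c<d" "i<j" "k<l" "(i,j)\<noteq>(k,l)"
   and ijkl: "{i,j,k,l} = {p,q,s}"
   and h: "\<And>u. u \<in> {i,j,k,l,a,b,c,d} \<Longrightarrow> transpose a b (transpose c d u) = transpose i j (transpose k l u)"
  shows "(a,b) \<in> {(p,q),(p,s),(q,s)} \<and> (c,d) \<in> {(p,q),(p,s),(q,s)} \<and>
    transpose a b (transpose c d p) = transpose i j (transpose k l p) \<and>
    transpose a b (transpose c d q) = transpose i j (transpose k l q) \<and>
    transpose a b (transpose c d s) = transpose i j (transpose k l s)"
proof -
  have m: "a \<in> {p,q,s} \<and> b \<in> {p,q,s} \<and> c \<in> {p,q,s} \<and> d \<in> {p,q,s}"
    using stepA0[OF o(5,6,3,4,7) h] ijkl by simp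
  have "(a,b) \<in> {(p,q),(p,s),(q,s)}" using pair3[of a p q s b] m o by blast
  moreover have "(c,d) \<in> {(p,q),(p,s),(q,s)}" using pair3[of c p q s d] m o by blast
  moreover have "p \<in> {i,j,k,l,a,b,c,d}" "q \<in> {i,j,k,l,a,b,c,d}" "s \<in> {i,j,k,l,a,b,c,d}" using ijkl by auto
  ultimately show ?thesis using h[of p] h[of q] h[of s] by simp
qed

lemma cyc1:
  fixes p q s a b c d :: nat
  assumes o: "p<q" "q<s"
   and ab: "(a,b) \<in> {(p,q),(p,s),(q,s)}" and cd: "(c,d) \<in> {(p,q),(p,s),(q,s)}"
   and e: "transpose a b (transpose c d p) = q" "transpose a b (transpose c d q) = s" "transpose a b (transpose c d s) = p"
  shows "(a,b,c,d) \<in> {(p,q,q,s),(q,s,p,s),(p,s,p,q)}"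
proof -
  have ne: "p \<noteq> q" "q \<noteq> p" "p \<noteq> s" "s \<noteq> p" "q \<noteq> s" "s \<noteq> q" using o by auto
  from ab cd show ?thesis
    by (elim insertE singletonE emptyE; use e ne in \<open>simp add: transpose_def\<close>)
qed

lemma cyc2:
  fixes p q s a b c d :: nat
  assumes o: "p<q" "q<s"
   and ab: "(a,b) \<in> {(p,q),(p,s),(q,s)}" and cd: "(c,d) \<in> {(p,q),(p,s),(q,s)}"
   and e: "transpose a b (transpose c d p) = s" "transpose a b (transpose c d q) = p" "transpose a b (transpose c d s) = q"
  shows "(a,b,c,d) \<in> {(q,s,p,q),(p,q,p,s),(p,s,q,s)}"
proof -
  have ne: "p \<noteq> q" "q \<noteq> p" "p \<noteq> s" "s \<noteq> p" "q \<noteq> s" "s \<noteq> q" using o by auto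
  from ab cd show ?thesis
    by (elim insertE singletonE emptyE; use e ne in \<open>simp add: transpose_def\<close>)
qed

lemma candD:
  fixes i j k l a b c d :: nat
  assumes o: "i<j" "k<l" "a<b" "c<d" and dj: "i\<noteq>k" "i\<noteq>l" "j\<noteq>k" "j\<noteq>l"
   and m: "a \<in> {i,j,k,l}" "b \<in> {i,j,k,l}" "c \<in> {i,j,k,l}" "d \<in> {i,j,k,l}"
   and e: "transpose a b (transpose c d i) = j" "transpose a b (transpose c d j) = i"
     "transpose a b (transpose c d k) = l" "transpose a b (transpose c d l) = k"
  shows "(a,b,c,d) \<in> {(i,j,k,l),(k,l,i,j)}"
proof -
  define f where "f x = transpose a b (transpose c d x)" for x
  have ff: "f (f x) = x" if "x \<in> {i,j,k,l}" for x using that e unfolding f_def by auto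
  have fx: "f x \<noteq> x" if "x \<in> {i,j,k,l}" for x using that e o dj unfolding f_def by auto
  have ca: "c \<noteq> a"
  proof
    assume ca: "c = a"
    have "d \<noteq> b" using fx[of i] ca unfolding f_def by auto
    then have "f a = d" "f d = b" using ca o unfolding f_def by auto
    then show False using ff[OF m(1)] o by simp
  qed
  have cb: "c \<noteq> b"
  proof
    assume cb: "c = b"
    then have "f b = d" "f d = a" using cb o unfolding f_def by auto
    then show False using ff[OF m(2)] o by simp
  qed
  have da: "d \<noteq> a"
  proof
    assume da: "d = a"
    then have "f a = c" "f c = b" using da o unfolding f_def by auto
    then show False using ff[OF m(1)] o by simp
  qed
  have db: "d \<noteq> b"
  proof
    assume db: "d = b"
    have "c \<noteq> a" using ca .
    then have "f b = c" "f c = a" using db o unfolding f_def by auto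
    then show False using ff[OF m(2)] o by simp
  qed
  have fa: "f a = b" using ca cb da db unfolding f_def by simp
  have fc: "f c = d" using ca cb da db o unfolding f_def by simp
  have fi: "f i = j" "f j = i" "f k = l" "f l = k" using e unfolding f_def by auto
  have ab: "(a,b) \<in> {(i,j),(k,l)}"
    using m(1) fa fi o by auto
  have cd: "(c,d) \<in> {(i,j),(k,l)}"
    using m(3) fc fi o by auto
  show ?thesis using ab cd ca by auto
qed

definition TW :: "(nat \<Rightarrow> nat) \<Rightarrow> nat \<Rightarrow> nat \<Rightarrow> nat \<Rightarrow> nat \<Rightarrow> nat \<Rightarrow> nat" where
  "TW \<tau> a b c d = \<tau> \<circ> transpose a b \<circ> transpose c d"
definition Hd :: "(nat \<Rightarrow> nat) \<Rightarrow> nat \<Rightarrow> nat \<Rightarrow> nat \<Rightarrow> nat \<Rightarrow> nat \<Rightarrow> int" where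
  "Hd \<tau> a b c d = (\<lambda>u. dd \<tau> a b * (ind a u - ind b u) + dd (\<tau> \<circ> transpose a b) c d * (ind c u - ind d u))"

lemma C1:
  fixes \<tau> :: "nat \<Rightarrow> nat"
  assumes o: "p<q" "q<s" and tn: "\<tau> p \<noteq> \<tau> q" "\<tau> q \<noteq> \<tau> s" "\<tau> p \<noteq> \<tau> s"
  shows "TW \<tau> q s p s = TW \<tau> p q q s" "TW \<tau> p s p q = TW \<tau> p q q s"
    "Hd \<tau> q s p s = Hd \<tau> p q q s \<or> Hd \<tau> p s p q = Hd \<tau> p q q s"
    "\<not> (Hd \<tau> q s p s = Hd \<tau> p q q s \<and> Hd \<tau> p s p q = Hd \<tau> p q q s)"
proof -
  show "TW \<tau> q s p s = TW \<tau> p q q s" "TW \<tau> p s p q = TW \<tau> p q q s"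
    using o unfolding TW_def fun_eq_iff by (auto simp: transpose_def)
  show "Hd \<tau> q s p s = Hd \<tau> p q q s \<or> Hd \<tau> p s p q = Hd \<tau> p q q s"
    using o tn  unfolding fun_eq_iff Hd_def dd_def ind_def  by (auto simp: transpose_def)
  show "\<not> (Hd \<tau> q s p s = Hd \<tau> p q q s \<and> Hd \<tau> p s p q = Hd \<tau> p q q s)"
  proof
    assume h: "Hd \<tau> q s p s = Hd \<tau> p q q s \<and> Hd \<tau> p s p q = Hd \<tau> p q q s"
    have "Hd \<tau> q s p s p = Hd \<tau> p q q s p" "Hd \<tau> q s p s q = Hd \<tau> p q q s q" "Hd \<tau> q s p s s = Hd \<tau> p q q s s"
     "Hd \<tau> p s p q p = Hd \<tau> p q q s p" "Hd \<tau> p s p q q = Hd \<tau> p q q s q" "Hd \<tau> p s p q s = Hd \<tau> p q q s s"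
      using h by auto
    then show False using o tn  unfolding Hd_def dd_def ind_def  by (auto simp: transpose_def split: if_splits)
  qed
qed

lemma C2:
  fixes \<tau> :: "nat \<Rightarrow> nat"
  assumes o: "p<q" "q<s" and tn: "\<tau> p \<noteq> \<tau> q" "\<tau> q \<noteq> \<tau> s" "\<tau> p \<noteq> \<tau> s"
  shows "TW \<tau> p q p s = TW \<tau> q s p q" "TW \<tau> p s q s = TW \<tau> q s p q"
    "Hd \<tau> p q p s = Hd \<tau> q s p q \<or> Hd \<tau> p s q s = Hd \<tau> q s p q"
    "\<not> (Hd \<tau> p q p s = Hd \<tau> q s p q \<and> Hd \<tau> p s q s = Hd \<tau> q s p q)"
proof -
  show "TW \<tau> p q p s = TW \<tau> q s p q" "TW \<tau> p s q s = TW \<tau> q s p q"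
    using o unfolding TW_def fun_eq_iff by (auto simp: transpose_def)
  show "Hd \<tau> p q p s = Hd \<tau> q s p q \<or> Hd \<tau> p s q s = Hd \<tau> q s p q"
    using o tn  unfolding fun_eq_iff Hd_def dd_def ind_def  by (auto simp: transpose_def)
  show "\<not> (Hd \<tau> p q p s = Hd \<tau> q s p q \<and> Hd \<tau> p s q s = Hd \<tau> q s p q)"
  proof
    assume h: "Hd \<tau> p q p s = Hd \<tau> q s p q \<and> Hd \<tau> p s q s = Hd \<tau> q s p q"
    have "Hd \<tau> p q p s p = Hd \<tau> q s p q p" "Hd \<tau> p q p s q = Hd \<tau> q s p q q" "Hd \<tau> p q p s s = Hd \<tau> q s p q s"
     "Hd \<tau> p s q s p = Hd \<tau> q s p q p" "Hd \<tau> p s q s q = Hd \<tau> q s p q q" "Hd \<tau> p s q s s = Hd \<tau> q s p q s"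
      using h by auto
    then show False using o tn  unfolding Hd_def dd_def ind_def  by (auto simp: transpose_def split: if_splits)
  qed
qed

lemma C3:
  fixes \<tau> :: "nat \<Rightarrow> nat"
  assumes o: "p<q" "q<s" and tn: "\<tau> p \<noteq> \<tau> q" "\<tau> q \<noteq> \<tau> s" "\<tau> p \<noteq> \<tau> s" and bd: "\<not> bad (\<tau> \<circ> transpose p q) p s q"
  shows "TW \<tau> q s p q = TW \<tau> p q p s" "TW \<tau> p s q s = TW \<tau> p q p s"
    "Hd \<tau> q s p q = Hd \<tau> p q p s \<or> Hd \<tau> p s q s = Hd \<tau> p q p s"
    "\<not> (Hd \<tau> q s p q = Hd \<tau> p q p s \<and> Hd \<tau> p s q s = Hd \<tau> p q p s)"
proof -
  show "TW \<tau> q s p q = TW \<tau> p q p s" "TW \<tau> p s q s = TW \<tau> p q p s"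
    using o unfolding TW_def fun_eq_iff by (auto simp: transpose_def)
  show "Hd \<tau> q s p q = Hd \<tau> p q p s \<or> Hd \<tau> p s q s = Hd \<tau> p q p s"
    using o tn bd unfolding fun_eq_iff Hd_def dd_def ind_def bad_def by (auto simp: transpose_def)
  show "\<not> (Hd \<tau> q s p q = Hd \<tau> p q p s \<and> Hd \<tau> p s q s = Hd \<tau> p q p s)"
  proof
    assume h: "Hd \<tau> q s p q = Hd \<tau> p q p s \<and> Hd \<tau> p s q s = Hd \<tau> p q p s"
    have "Hd \<tau> q s p q p = Hd \<tau> p q p s p" "Hd \<tau> q s p q q = Hd \<tau> p q p s q" "Hd \<tau> q s p q s = Hd \<tau> p q p s s"
     "Hd \<tau> p s q s p = Hd \<tau> p q p s p" "Hd \<tau> p s q s q = Hd \<tau> p q p s q" "Hd \<tau> p s q s s = Hd \<tau> p q p s s"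
      using h by auto
    then show False using o tn bd unfolding Hd_def dd_def ind_def bad_def by (auto simp: transpose_def split: if_splits)
  qed
qed

lemma C4:
  fixes \<tau> :: "nat \<Rightarrow> nat"
  assumes o: "p<q" "q<s" and tn: "\<tau> p \<noteq> \<tau> q" "\<tau> q \<noteq> \<tau> s" "\<tau> p \<noteq> \<tau> s" and bd: "\<not> bad \<tau> p s q"
  shows "TW \<tau> p q q s = TW \<tau> p s p q" "TW \<tau> q s p s = TW \<tau> p s p q"
    "Hd \<tau> p q q s = Hd \<tau> p s p q \<or> Hd \<tau> q s p s = Hd \<tau> p s p q"
    "\<not> (Hd \<tau> p q q s = Hd \<tau> p s p q \<and> Hd \<tau> q s p s = Hd \<tau> p s p q)"
proof -
  show "TW \<tau> p q q s = TW \<tau> p s p q" "TW \<tau> q s p s = TW \<tau> p s p q"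
    using o unfolding TW_def fun_eq_iff by (auto simp: transpose_def)
  show "Hd \<tau> p q q s = Hd \<tau> p s p q \<or> Hd \<tau> q s p s = Hd \<tau> p s p q"
    using o tn bd unfolding fun_eq_iff Hd_def dd_def ind_def bad_def by (auto simp: transpose_def)
  show "\<not> (Hd \<tau> p q q s = Hd \<tau> p s p q \<and> Hd \<tau> q s p s = Hd \<tau> p s p q)"
  proof
    assume h: "Hd \<tau> p q q s = Hd \<tau> p s p q \<and> Hd \<tau> q s p s = Hd \<tau> p s p q"
    have "Hd \<tau> p q q s p = Hd \<tau> p s p q p" "Hd \<tau> p q q s q = Hd \<tau> p s p q q" "Hd \<tau> p q q s s = Hd \<tau> p s p q s"
     "Hd \<tau> q s p s p = Hd \<tau> p s p q p" "Hd \<tau> q s p s q = Hd \<tau> p s p q q" "Hd \<tau> q s p s s = Hd \<tau> p s p q s"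
      using h by auto
    then show False using o tn bd unfolding Hd_def dd_def ind_def bad_def by (auto simp: transpose_def split: if_splits)
  qed
qed

lemma C5:
  fixes \<tau> :: "nat \<Rightarrow> nat"
  assumes o: "p<q" "q<s" and tn: "\<tau> p \<noteq> \<tau> q" "\<tau> q \<noteq> \<tau> s" "\<tau> p \<noteq> \<tau> s" and bd: "\<not> bad \<tau> p s q"
  shows "TW \<tau> q s p q = TW \<tau> p s q s" "TW \<tau> p q p s = TW \<tau> p s q s"
    "Hd \<tau> q s p q = Hd \<tau> p s q s \<or> Hd \<tau> p q p s = Hd \<tau> p s q s"
    "\<not> (Hd \<tau> q s p q = Hd \<tau> p s q s \<and> Hd \<tau> p q p s = Hd \<tau> p s q s)"
proof -
  show "TW \<tau> q s p q = TW \<tau> p s q s" "TW \<tau> p q p s = TW \<tau> p s q s"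
    using o unfolding TW_def fun_eq_iff by (auto simp: transpose_def)
  show "Hd \<tau> q s p q = Hd \<tau> p s q s \<or> Hd \<tau> p q p s = Hd \<tau> p s q s"
    using o tn bd unfolding fun_eq_iff Hd_def dd_def ind_def bad_def by (auto simp: transpose_def)
  show "\<not> (Hd \<tau> q s p q = Hd \<tau> p s q s \<and> Hd \<tau> p q p s = Hd \<tau> p s q s)"
  proof
    assume h: "Hd \<tau> q s p q = Hd \<tau> p s q s \<and> Hd \<tau> p q p s = Hd \<tau> p s q s"
    have "Hd \<tau> q s p q p = Hd \<tau> p s q s p" "Hd \<tau> q s p q q = Hd \<tau> p s q s q" "Hd \<tau> q s p q s = Hd \<tau> p s q s s"
     "Hd \<tau> p q p s p = Hd \<tau> p s q s p" "Hd \<tau> p q p s q = Hd \<tau> p s q s q" "Hd \<tau> p q p s s = Hd \<tau> p s q s s"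
      using h by auto
    then show False using o tn bd unfolding Hd_def dd_def ind_def bad_def by (auto simp: transpose_def split: if_splits)
  qed
qed

lemma C6:
  fixes \<tau> :: "nat \<Rightarrow> nat"
  assumes o: "p<q" "q<s" and tn: "\<tau> p \<noteq> \<tau> q" "\<tau> q \<noteq> \<tau> s" "\<tau> p \<noteq> \<tau> s" and bd: "\<not> bad (\<tau> \<circ> transpose q s) p s q"
  shows "TW \<tau> p q q s = TW \<tau> q s p s" "TW \<tau> p s p q = TW \<tau> q s p s"
    "Hd \<tau> p q q s = Hd \<tau> q s p s \<or> Hd \<tau> p s p q = Hd \<tau> q s p s"
    "\<not> (Hd \<tau> p q q s = Hd \<tau> q s p s \<and> Hd \<tau> p s p q = Hd \<tau> q s p s)"
proof -
  show "TW \<tau> p q q s = TW \<tau> q s p s" "TW \<tau> p s p q = TW \<tau> q s p s"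
    using o unfolding TW_def fun_eq_iff by (auto simp: transpose_def)
  show "Hd \<tau> p q q s = Hd \<tau> q s p s \<or> Hd \<tau> p s p q = Hd \<tau> q s p s"
    using o tn bd unfolding fun_eq_iff Hd_def dd_def ind_def bad_def by (auto simp: transpose_def)
  show "\<not> (Hd \<tau> p q q s = Hd \<tau> q s p s \<and> Hd \<tau> p s p q = Hd \<tau> q s p s)"
  proof
    assume h: "Hd \<tau> p q q s = Hd \<tau> q s p s \<and> Hd \<tau> p s p q = Hd \<tau> q s p s"
    have "Hd \<tau> p q q s p = Hd \<tau> q s p s p" "Hd \<tau> p q q s q = Hd \<tau> q s p s q" "Hd \<tau> p q q s s = Hd \<tau> q s p s s"
     "Hd \<tau> p s p q p = Hd \<tau> q s p s p" "Hd \<tau> p s p q q = Hd \<tau> q s p s q" "Hd \<tau> p s p q s = Hd \<tau> q s p s s"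
      using h by auto
    then show False using o tn bd unfolding Hd_def dd_def ind_def bad_def by (auto simp: transpose_def split: if_splits)
  qed
qed

lemma CD:
  fixes \<tau> :: "nat \<Rightarrow> nat"
  assumes o: "i<j" "k<l" and dj: "i\<noteq>k" "i\<noteq>l" "j\<noteq>k" "j\<noteq>l"
  shows "TW \<tau> k l i j = TW \<tau> i j k l" "Hd \<tau> k l i j = Hd \<tau> i j k l"
proof -
  show "TW \<tau> k l i j = TW \<tau> i j k l"
    using o dj unfolding TW_def fun_eq_iff by (auto simp: transpose_def)
  have "dd \<tau> k l = dd (\<tau> \<circ> transpose i j) k l" "dd \<tau> i j = dd (\<tau> \<circ> transpose k l) i j"
    using dj unfolding dd_def by auto
  then show "Hd \<tau> k l i j = Hd \<tau> i j k l" unfolding Hd_def fun_eq_iff by (simp add: algebra_simps)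
qed

definition Vt :: "nat \<Rightarrow> (nat \<Rightarrow> nat) \<Rightarrow> nat \<Rightarrow> nat \<Rightarrow> nat \<Rightarrow> nat \<Rightarrow> nat \<times> nat \<times> nat \<times> nat \<Rightarrow> bool" where
  "Vt n \<tau> i j k l = (\<lambda>(a,b,c,d). 1 \<le> a \<and> a < b \<and> b \<le> n \<and> 1 \<le> c \<and> c < d \<and> d \<le> n \<and> (a,b) \<noteq> (i,j) \<and>
      TW \<tau> a b c d = TW \<tau> i j k l \<and> Hd \<tau> a b c d = Hd \<tau> i j k l)"

lemma Vt_perm:
  assumes t: "\<tau> permutes {1..n}" and r: "1 \<le> i" "j \<le> n" "1 \<le> k" "l \<le> n" "i < j" "k < l"
    and v: "Vt n \<tau> i j k l (a,b,c,d)"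
  shows "\<And>u. u \<in> {i,j,k,l,a,b,c,d} \<Longrightarrow> transpose a b (transpose c d u) = transpose i j (transpose k l u)"
proof -
  fix u assume u: "u \<in> {i,j,k,l,a,b,c,d}"
  have v': "1 \<le> a" "a < b" "b \<le> n" "1 \<le> c" "c < d" "d \<le> n" "TW \<tau> a b c d = TW \<tau> i j k l"
    using v unfolding Vt_def by auto
  have un: "u \<in> {1..n}" using u r v' by auto
  have pr: "transpose x y z \<in> {1..n}" if "x \<in> {1..n}" "y \<in> {1..n}" "z \<in> {1..n}" for x y z
    using that by (auto simp: transpose_def)
  have m1: "transpose a b (transpose c d u) \<in> {1..n}" using pr un v' by simp
  have m2: "transpose i j (transpose k l u) \<in> {1..n}" using pr un r by simp
  have "\<tau> (transpose a b (transpose c d u)) = \<tau> (transpose i j (transpose k l u))"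
    using v'(7) unfolding TW_def fun_eq_iff by simp
  then show "transpose a b (transpose c d u) = transpose i j (transpose k l u)"
    using permutes_inj_on[OF t] m1 m2 by (auto dest: inj_onD)
qed

lemma core_disj:
  assumes t: "\<tau> permutes {1..n}" and r: "1 \<le> i" "j \<le> n" "1 \<le> k" "l \<le> n" "i < j" "k < l"
    and dj: "i\<noteq>k" "i\<noteq>l" "j\<noteq>k" "j\<noteq>l"
  shows "\<exists>!x. Vt n \<tau> i j k l x"
proof -
  have "Vt n \<tau> i j k l (k,l,i,j)" unfolding Vt_def using r dj CD[OF r(5,6) dj] by auto
  moreover have "x = (k,l,i,j)" if "Vt n \<tau> i j k l x" for x
  proof -
    obtain a b c d where x: "x = (a,b,c,d)" by (cases x) auto
    have v: "Vt n \<tau> i j k l (a,b,c,d)" using that x by simp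
    have "(a,b,c,d) \<in> {(i,j,k,l),(k,l,i,j)}"
    proof -
      have vv: "a < b" "c < d" using v unfolding Vt_def by auto
      note h = Vt_perm[OF t r v]
      have mm: "a \<in> {i,j,k,l} \<and> b \<in> {i,j,k,l} \<and> c \<in> {i,j,k,l} \<and> d \<in> {i,j,k,l}"
        by (rule stepA0[OF r(5,6) vv _ h]) (use dj in simp)
      note m = mm[THEN conjunct1] mm[THEN conjunct2, THEN conjunct1] mm[THEN conjunct2, THEN conjunct2, THEN conjunct1]
         mm[THEN conjunct2, THEN conjunct2, THEN conjunct2]
      have e: "transpose a b (transpose c d i) = j" "transpose a b (transpose c d j) = i"
         "transpose a b (transpose c d k) = l" "transpose a b (transpose c d l) = k"
        using h[of i] h[of j] h[of k] h[of l] dj r by simp_all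
      show ?thesis by (rule candD[OF r(5,6) vv dj m e])
    qed
    then show ?thesis using v x unfolding Vt_def by auto
  qed
  ultimately show ?thesis by blast
qed

lemma shared_generic:
  assumes t: "\<tau> permutes {1..n}" and r: "1 \<le> i" "j \<le> n" "1 \<le> k" "l \<le> n" "i < j" "k < l" "(i,j) \<noteq> (k,l)"
    and pqs: "p < q" "q < s" "{i,j,k,l} = {p,q,s}"
    and cyc: "\<And>a b c d. (a,b) \<in> {(p,q),(p,s),(q,s)} \<Longrightarrow> (c,d) \<in> {(p,q),(p,s),(q,s)} \<Longrightarrow>
       transpose a b (transpose c d p) = transpose i j (transpose k l p) \<Longrightarrow>
       transpose a b (transpose c d q) = transpose i j (transpose k l q) \<Longrightarrow>
       transpose a b (transpose c d s) = transpose i j (transpose k l s) \<Longrightarrow> (a,b,c,d) \<in> {(i,j,k,l), X, Y}"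
    and X: "Vt n \<tau> i j k l X \<or> Vt n \<tau> i j k l Y" "\<not> (Vt n \<tau> i j k l X \<and> Vt n \<tau> i j k l Y)"
  shows "\<exists>!x. Vt n \<tau> i j k l x"
proof -
  have "x \<in> {X, Y}" if v0: "Vt n \<tau> i j k l x" for x
  proof -
    obtain a b c d where x: "x = (a,b,c,d)" by (cases x) auto
    have v: "Vt n \<tau> i j k l (a,b,c,d)" using v0 x by simp
    have o: "a < b" "c < d" "(a,b) \<noteq> (i,j)" using v unfolding Vt_def by auto
    have "(a,b) \<in> {(p,q),(p,s),(q,s)} \<and> (c,d) \<in> {(p,q),(p,s),(q,s)} \<and>
      transpose a b (transpose c d p) = transpose i j (transpose k l p) \<and>
      transpose a b (transpose c d q) = transpose i j (transpose k l q) \<and>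
      transpose a b (transpose c d s) = transpose i j (transpose k l s)"
      by (rule candP[OF pqs(1,2) o(1,2) r(5,6,7) pqs(3)]) (rule Vt_perm[OF t r(1-6) v])
    note cc = this[THEN conjunct1] this[THEN conjunct2, THEN conjunct1]
      this[THEN conjunct2, THEN conjunct2, THEN conjunct1]
      this[THEN conjunct2, THEN conjunct2, THEN conjunct2, THEN conjunct1]
      this[THEN conjunct2, THEN conjunct2, THEN conjunct2, THEN conjunct2]
    have "(a,b,c,d) \<in> {(i,j,k,l), X, Y}" by (rule cyc[OF cc])
    then show ?thesis using o x by auto
  qed
  then show ?thesis using X by blast
qed

lemma coreC1:
  fixes \<tau> :: "nat \<Rightarrow> nat"
  assumes t: "\<tau> permutes {1..n}" and o: "1 \<le> p" "p < q" "q < s" "s \<le> n"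
  shows "\<exists>!x. Vt n \<tau> p q q s x"
proof -
  have inj: "\<tau> x = \<tau> y \<longleftrightarrow> x = y" for x y using permutes_inj[OF t] by (auto dest: injD)
  have tn: "\<tau> p \<noteq> \<tau> q" "\<tau> q \<noteq> \<tau> s" "\<tau> p \<noteq> \<tau> s" using o inj by auto
  note cf = C1[OF o(2,3) tn ]
  have ne: "p \<noteq> q" "q \<noteq> p" "p \<noteq> s" "s \<noteq> p" "q \<noteq> s" "s \<noteq> q" using o by auto
  show ?thesis
  proof (rule shared_generic[OF t, where p=p and q=q and s=s and X="(q,s,p,s)" and Y="(p,s,p,q)"])
    show "{p,q,q,s} = {p,q,s}" by auto
    fix a b c d
    assume ab: "(a,b) \<in> {(p,q),(p,s),(q,s)}" and cd: "(c,d) \<in> {(p,q),(p,s),(q,s)}"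
      and e: "transpose a b (transpose c d p) = transpose p q (transpose q s p)"
        "transpose a b (transpose c d q) = transpose p q (transpose q s q)"
        "transpose a b (transpose c d s) = transpose p q (transpose q s s)"
    have e': "transpose a b (transpose c d p) = q" "transpose a b (transpose c d q) = s"
        "transpose a b (transpose c d s) = p" using e ne by simp_all
    show "(a,b,c,d) \<in> {(p,q,q,s), (q,s,p,s), (p,s,p,q)}" using cyc1[OF o(2,3) ab cd e'] by auto
  next
    show "Vt n \<tau> p q q s (q,s,p,s) \<or> Vt n \<tau> p q q s (p,s,p,q)"
      using cf(1,2,3) o unfolding Vt_def by auto
    show "\<not> (Vt n \<tau> p q q s (q,s,p,s) \<and> Vt n \<tau> p q q s (p,s,p,q))"
      using cf(4) unfolding Vt_def by auto
  qed (use o in auto)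
qed

lemma coreC2:
  fixes \<tau> :: "nat \<Rightarrow> nat"
  assumes t: "\<tau> permutes {1..n}" and o: "1 \<le> p" "p < q" "q < s" "s \<le> n"
  shows "\<exists>!x. Vt n \<tau> q s p q x"
proof -
  have inj: "\<tau> x = \<tau> y \<longleftrightarrow> x = y" for x y using permutes_inj[OF t] by (auto dest: injD)
  have tn: "\<tau> p \<noteq> \<tau> q" "\<tau> q \<noteq> \<tau> s" "\<tau> p \<noteq> \<tau> s" using o inj by auto
  note cf = C2[OF o(2,3) tn ]
  have ne: "p \<noteq> q" "q \<noteq> p" "p \<noteq> s" "s \<noteq> p" "q \<noteq> s" "s \<noteq> q" using o by auto
  show ?thesis
  proof (rule shared_generic[OF t, where p=p and q=q and s=s and X="(p,q,p,s)" and Y="(p,s,q,s)"])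
    show "{q,s,p,q} = {p,q,s}" by auto
    fix a b c d
    assume ab: "(a,b) \<in> {(p,q),(p,s),(q,s)}" and cd: "(c,d) \<in> {(p,q),(p,s),(q,s)}"
      and e: "transpose a b (transpose c d p) = transpose q s (transpose p q p)"
        "transpose a b (transpose c d q) = transpose q s (transpose p q q)"
        "transpose a b (transpose c d s) = transpose q s (transpose p q s)"
    have e': "transpose a b (transpose c d p) = s" "transpose a b (transpose c d q) = p"
        "transpose a b (transpose c d s) = q" using e ne by simp_all
    show "(a,b,c,d) \<in> {(q,s,p,q), (p,q,p,s), (p,s,q,s)}" using cyc2[OF o(2,3) ab cd e'] by auto
  next
    show "Vt n \<tau> q s p q (p,q,p,s) \<or> Vt n \<tau> q s p q (p,s,q,s)"
      using cf(1,2,3) o unfolding Vt_def by auto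
    show "\<not> (Vt n \<tau> q s p q (p,q,p,s) \<and> Vt n \<tau> q s p q (p,s,q,s))"
      using cf(4) unfolding Vt_def by auto
  qed (use o in auto)
qed

lemma coreC3:
  fixes \<tau> :: "nat \<Rightarrow> nat"
  assumes t: "\<tau> permutes {1..n}" and o: "1 \<le> p" "p < q" "q < s" "s \<le> n" and bs: "badset (\<tau> \<circ> transpose p q) p s = {}"
  shows "\<exists>!x. Vt n \<tau> p q p s x"
proof -
  have inj: "\<tau> x = \<tau> y \<longleftrightarrow> x = y" for x y using permutes_inj[OF t] by (auto dest: injD)
  have tn: "\<tau> p \<noteq> \<tau> q" "\<tau> q \<noteq> \<tau> s" "\<tau> p \<noteq> \<tau> s" using o inj by auto
  have bd: "\<not> bad (\<tau> \<circ> transpose p q) p s q" using bs o unfolding badset_def by auto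
  note cf = C3[OF o(2,3) tn bd]
  have ne: "p \<noteq> q" "q \<noteq> p" "p \<noteq> s" "s \<noteq> p" "q \<noteq> s" "s \<noteq> q" using o by auto
  show ?thesis
  proof (rule shared_generic[OF t, where p=p and q=q and s=s and X="(q,s,p,q)" and Y="(p,s,q,s)"])
    show "{p,q,p,s} = {p,q,s}" by auto
    fix a b c d
    assume ab: "(a,b) \<in> {(p,q),(p,s),(q,s)}" and cd: "(c,d) \<in> {(p,q),(p,s),(q,s)}"
      and e: "transpose a b (transpose c d p) = transpose p q (transpose p s p)"
        "transpose a b (transpose c d q) = transpose p q (transpose p s q)"
        "transpose a b (transpose c d s) = transpose p q (transpose p s s)"
    have e': "transpose a b (transpose c d p) = s" "transpose a b (transpose c d q) = p"
        "transpose a b (transpose c d s) = q" using e ne by simp_all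
    show "(a,b,c,d) \<in> {(p,q,p,s), (q,s,p,q), (p,s,q,s)}" using cyc2[OF o(2,3) ab cd e'] by auto
  next
    show "Vt n \<tau> p q p s (q,s,p,q) \<or> Vt n \<tau> p q p s (p,s,q,s)"
      using cf(1,2,3) o unfolding Vt_def by auto
    show "\<not> (Vt n \<tau> p q p s (q,s,p,q) \<and> Vt n \<tau> p q p s (p,s,q,s))"
      using cf(4) unfolding Vt_def by auto
  qed (use o in auto)
qed

lemma coreC4:
  fixes \<tau> :: "nat \<Rightarrow> nat"
  assumes t: "\<tau> permutes {1..n}" and o: "1 \<le> p" "p < q" "q < s" "s \<le> n" and bs: "badset \<tau> p s = {}"
  shows "\<exists>!x. Vt n \<tau> p s p q x"
proof -
  have inj: "\<tau> x = \<tau> y \<longleftrightarrow> x = y" for x y using permutes_inj[OF t] by (auto dest: injD)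
  have tn: "\<tau> p \<noteq> \<tau> q" "\<tau> q \<noteq> \<tau> s" "\<tau> p \<noteq> \<tau> s" using o inj by auto
  have bd: "\<not> bad \<tau> p s q" using bs o unfolding badset_def by auto
  note cf = C4[OF o(2,3) tn bd]
  have ne: "p \<noteq> q" "q \<noteq> p" "p \<noteq> s" "s \<noteq> p" "q \<noteq> s" "s \<noteq> q" using o by auto
  show ?thesis
  proof (rule shared_generic[OF t, where p=p and q=q and s=s and X="(p,q,q,s)" and Y="(q,s,p,s)"])
    show "{p,s,p,q} = {p,q,s}" by auto
    fix a b c d
    assume ab: "(a,b) \<in> {(p,q),(p,s),(q,s)}" and cd: "(c,d) \<in> {(p,q),(p,s),(q,s)}"
      and e: "transpose a b (transpose c d p) = transpose p s (transpose p q p)"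
        "transpose a b (transpose c d q) = transpose p s (transpose p q q)"
        "transpose a b (transpose c d s) = transpose p s (transpose p q s)"
    have e': "transpose a b (transpose c d p) = q" "transpose a b (transpose c d q) = s"
        "transpose a b (transpose c d s) = p" using e ne by simp_all
    show "(a,b,c,d) \<in> {(p,s,p,q), (p,q,q,s), (q,s,p,s)}" using cyc1[OF o(2,3) ab cd e'] by auto
  next
    show "Vt n \<tau> p s p q (p,q,q,s) \<or> Vt n \<tau> p s p q (q,s,p,s)"
      using cf(1,2,3) o unfolding Vt_def by auto
    show "\<not> (Vt n \<tau> p s p q (p,q,q,s) \<and> Vt n \<tau> p s p q (q,s,p,s))"
      using cf(4) unfolding Vt_def by auto
  qed (use o in auto)
qed

lemma coreC5:
  fixes \<tau> :: "nat \<Rightarrow> nat"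
  assumes t: "\<tau> permutes {1..n}" and o: "1 \<le> p" "p < q" "q < s" "s \<le> n" and bs: "badset \<tau> p s = {}"
  shows "\<exists>!x. Vt n \<tau> p s q s x"
proof -
  have inj: "\<tau> x = \<tau> y \<longleftrightarrow> x = y" for x y using permutes_inj[OF t] by (auto dest: injD)
  have tn: "\<tau> p \<noteq> \<tau> q" "\<tau> q \<noteq> \<tau> s" "\<tau> p \<noteq> \<tau> s" using o inj by auto
  have bd: "\<not> bad \<tau> p s q" using bs o unfolding badset_def by auto
  note cf = C5[OF o(2,3) tn bd]
  have ne: "p \<noteq> q" "q \<noteq> p" "p \<noteq> s" "s \<noteq> p" "q \<noteq> s" "s \<noteq> q" using o by auto
  show ?thesis
  proof (rule shared_generic[OF t, where p=p and q=q and s=s and X="(q,s,p,q)" and Y="(p,q,p,s)"])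
    show "{p,s,q,s} = {p,q,s}" by auto
    fix a b c d
    assume ab: "(a,b) \<in> {(p,q),(p,s),(q,s)}" and cd: "(c,d) \<in> {(p,q),(p,s),(q,s)}"
      and e: "transpose a b (transpose c d p) = transpose p s (transpose q s p)"
        "transpose a b (transpose c d q) = transpose p s (transpose q s q)"
        "transpose a b (transpose c d s) = transpose p s (transpose q s s)"
    have e': "transpose a b (transpose c d p) = s" "transpose a b (transpose c d q) = p"
        "transpose a b (transpose c d s) = q" using e ne by simp_all
    show "(a,b,c,d) \<in> {(p,s,q,s), (q,s,p,q), (p,q,p,s)}" using cyc2[OF o(2,3) ab cd e'] by auto
  next
    show "Vt n \<tau> p s q s (q,s,p,q) \<or> Vt n \<tau> p s q s (p,q,p,s)"
      using cf(1,2,3) o unfolding Vt_def by auto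
    show "\<not> (Vt n \<tau> p s q s (q,s,p,q) \<and> Vt n \<tau> p s q s (p,q,p,s))"
      using cf(4) unfolding Vt_def by auto
  qed (use o in auto)
qed

lemma coreC6:
  fixes \<tau> :: "nat \<Rightarrow> nat"
  assumes t: "\<tau> permutes {1..n}" and o: "1 \<le> p" "p < q" "q < s" "s \<le> n" and bs: "badset (\<tau> \<circ> transpose q s) p s = {}"
  shows "\<exists>!x. Vt n \<tau> q s p s x"
proof -
  have inj: "\<tau> x = \<tau> y \<longleftrightarrow> x = y" for x y using permutes_inj[OF t] by (auto dest: injD)
  have tn: "\<tau> p \<noteq> \<tau> q" "\<tau> q \<noteq> \<tau> s" "\<tau> p \<noteq> \<tau> s" using o inj by auto
  have bd: "\<not> bad (\<tau> \<circ> transpose q s) p s q" using bs o unfolding badset_def by auto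
  note cf = C6[OF o(2,3) tn bd]
  have ne: "p \<noteq> q" "q \<noteq> p" "p \<noteq> s" "s \<noteq> p" "q \<noteq> s" "s \<noteq> q" using o by auto
  show ?thesis
  proof (rule shared_generic[OF t, where p=p and q=q and s=s and X="(p,q,q,s)" and Y="(p,s,p,q)"])
    show "{q,s,p,s} = {p,q,s}" by auto
    fix a b c d
    assume ab: "(a,b) \<in> {(p,q),(p,s),(q,s)}" and cd: "(c,d) \<in> {(p,q),(p,s),(q,s)}"
      and e: "transpose a b (transpose c d p) = transpose q s (transpose p s p)"
        "transpose a b (transpose c d q) = transpose q s (transpose p s q)"
        "transpose a b (transpose c d s) = transpose q s (transpose p s s)"
    have e': "transpose a b (transpose c d p) = q" "transpose a b (transpose c d q) = s"
        "transpose a b (transpose c d s) = p" using e ne by simp_all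
    show "(a,b,c,d) \<in> {(q,s,p,s), (p,q,q,s), (p,s,p,q)}" using cyc1[OF o(2,3) ab cd e'] by auto
  next
    show "Vt n \<tau> q s p s (p,q,q,s) \<or> Vt n \<tau> q s p s (p,s,p,q)"
      using cf(1,2,3) o unfolding Vt_def by auto
    show "\<not> (Vt n \<tau> q s p s (p,q,q,s) \<and> Vt n \<tau> q s p s (p,s,p,q))"
      using cf(4) unfolding Vt_def by auto
  qed (use o in auto)
qed

lemma core:
  fixes \<tau> :: "nat \<Rightarrow> nat"
  assumes t: "\<tau> permutes {1..n}" and r: "1 \<le> i" "i < j" "j \<le> n" "1 \<le> k" "k < l" "l \<le> n" "(i,j) \<noteq> (k,l)"
    and b1: "badset \<tau> i j = {}" and b2: "badset (\<tau> \<circ> transpose i j) k l = {}"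
  shows "\<exists>!x. Vt n \<tau> i j k l x"
proof -
  consider "i\<noteq>k \<and> i\<noteq>l \<and> j\<noteq>k \<and> j\<noteq>l" | "j = k" | "l = i" | "i = k \<and> j < l" | "i = k \<and> l < j"
    | "j = l \<and> i < k" | "j = l \<and> k < i"
    using r by (metis linorder_neqE_nat prod.inject)
  then show ?thesis
  proof cases
    case 1 then show ?thesis using core_disj[OF t r(1,3,4,6,2,5)] by blast
  next
    case 2 then show ?thesis using coreC1[OF t, of i j l] r by simp
  next
    case 3 then show ?thesis using coreC2[OF t, of k i j] r by simp
  next
    case 4 then show ?thesis using coreC3[OF t, of i j l] r b2 by simp
  next
    case 5 then show ?thesis using coreC4[OF t, of i l j] r b1 by simp
  next
    case 6 then show ?thesis using coreC5[OF t, of i k j] r b1 by simp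
  next
    case 7 then show ?thesis using coreC6[OF t, of k i j] r b2 by simp
  qed
qed

lemma badset_finite: "finite (badset \<tau> i j)"
  by (rule finite_subset[of _ "{i<..<j}"]) (auto simp: badset_def)

lemma root_inj:
  assumes e: "rt a b = rt i j" and o: "a < b" "i < j"
  shows "a = i \<and> b = j"
proof -
  have "rt a b a = rt i j a" "rt a b b = rt i j b" using e by simp_all
  then show ?thesis using o unfolding rt_def eps_def by (auto split: if_splits)
qed

context LS begin

lemma perm_step: "\<tau> permutes {1..n} \<Longrightarrow> 1 \<le> a \<Longrightarrow> a < b \<Longrightarrow> b \<le> n \<Longrightarrow> \<tau> \<circ> transpose a b permutes {1..n}"
  by (intro permutes_compose[of _ "{1..n}"] permutes_swap_id) auto

lemma two_step:
  assumes t: "\<tau> permutes {1..n}" and ab: "1 \<le> a" "a < b" "b \<le> n" and cd: "1 \<le> c" "c < d" "d \<le> n"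
  shows "refl n r (refl n r (E \<tau> (hc C)) (rt a b)) (rt c d) = E (TW \<tau> a b c d) (\<lambda>u. hc C u - Hd \<tau> a b c d u)"
    and "deg n r \<Lambda> (refl n r (refl n r (E \<tau> (hc C)) (rt a b)) (rt c d)) =
          deg n r \<Lambda> (E \<tau> (hc C)) + 2 + 2 * int (card (badset \<tau> a b)) + 2 * int (card (badset (\<tau> \<circ> transpose a b) c d))"
    and "admissible n r \<Lambda> (E \<tau> (hc C)) (rt a b) \<longleftrightarrow> badset \<tau> a b = {}"
    and "admissible n r \<Lambda> (refl n r (E \<tau> (hc C)) (rt a b)) (rt c d) \<longleftrightarrow> badset (\<tau> \<circ> transpose a b) c d = {}"
proof -
  have t1: "\<tau> \<circ> transpose a b permutes {1..n}" using perm_step[OF t ab] .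
  have a1: "a \<in> {1..n}" "b \<in> {1..n}" "a \<noteq> b" "c \<in> {1..n}" "d \<in> {1..n}" "c \<noteq> d" using ab cd by auto
  show "refl n r (refl n r (E \<tau> (hc C)) (rt a b)) (rt c d) = E (TW \<tau> a b c d) (\<lambda>u. hc C u - Hd \<tau> a b c d u)"
    unfolding refl_E[OF t a1(1-3)] refl_E[OF t1 a1(4-6)] TW_def Hd_def by (simp add: algebra_simps comp_assoc)
  have L1: "refl n r (E \<tau> (hc C)) (rt a b) = E (\<tau> \<circ> transpose a b) (hc (cup C a b (dd \<tau> a b)))"
    by (rule refl_E2[OF t ab])
  have d1: "deg n r \<Lambda> (refl n r (E \<tau> (hc C)) (rt a b)) = deg n r \<Lambda> (E \<tau> (hc C)) + 1 + 2 * int (card (badset \<tau> a b))"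
    by (rule deg_step[OF t ab])
  have d2: "deg n r \<Lambda> (refl n r (refl n r (E \<tau> (hc C)) (rt a b)) (rt c d)) =
      deg n r \<Lambda> (refl n r (E \<tau> (hc C)) (rt a b)) + 1 + 2 * int (card (badset (\<tau> \<circ> transpose a b) c d))"
    unfolding L1 by (rule deg_step[OF t1 cd])
  show "deg n r \<Lambda> (refl n r (refl n r (E \<tau> (hc C)) (rt a b)) (rt c d)) =
          deg n r \<Lambda> (E \<tau> (hc C)) + 2 + 2 * int (card (badset \<tau> a b)) + 2 * int (card (badset (\<tau> \<circ> transpose a b) c d))"
    using d1 d2 by simp
  show "admissible n r \<Lambda> (E \<tau> (hc C)) (rt a b) \<longleftrightarrow> badset \<tau> a b = {}"
    unfolding admissible_def d1 using badset_finite by simp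
  show "admissible n r \<Lambda> (refl n r (E \<tau> (hc C)) (rt a b)) (rt c d) \<longleftrightarrow> badset (\<tau> \<circ> transpose a b) c d = {}"
    unfolding admissible_def d2 using badset_finite by simp
qed

end

lemma TW_out: "k \<notin> {1..n} \<Longrightarrow> a \<in> {1..n} \<Longrightarrow> b \<in> {1..n} \<Longrightarrow> c \<in> {1..n} \<Longrightarrow> d \<in> {1..n} \<Longrightarrow> TW \<tau> a b c d k = \<tau> k"
  unfolding TW_def by (auto simp: transpose_def)

lemma Hd_out: "k \<notin> {1..n} \<Longrightarrow> a \<in> {1..n} \<Longrightarrow> b \<in> {1..n} \<Longrightarrow> c \<in> {1..n} \<Longrightarrow> d \<in> {1..n} \<Longrightarrow> Hd \<tau> a b c d k = 0"
  unfolding Hd_def ind_def by auto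

context LS begin

lemma TW_perm: "\<tau> permutes {1..n} \<Longrightarrow> 1 \<le> a \<Longrightarrow> a < b \<Longrightarrow> b \<le> n \<Longrightarrow> 1 \<le> c \<Longrightarrow> c < d \<Longrightarrow> d \<le> n \<Longrightarrow> TW \<tau> a b c d permutes {1..n}"
  unfolding TW_def by (rule perm_step[OF perm_step])

lemma final_eq:
  assumes t: "\<tau> permutes {1..n}"
    and r1: "1 \<le> a" "a < b" "b \<le> n" "1 \<le> c" "c < d" "d \<le> n"
    and r2: "1 \<le> i" "i < j" "j \<le> n" "1 \<le> k" "k < m" "m \<le> n"
  shows "E (TW \<tau> a b c d) (\<lambda>u. H u - Hd \<tau> a b c d u) = E (TW \<tau> i j k m) (\<lambda>u. H u - Hd \<tau> i j k m u) \<longleftrightarrow>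
         (TW \<tau> a b c d = TW \<tau> i j k m \<and> Hd \<tau> a b c d = Hd \<tau> i j k m)"
proof
  assume e: "E (TW \<tau> a b c d) (\<lambda>u. H u - Hd \<tau> a b c d u) = E (TW \<tau> i j k m) (\<lambda>u. H u - Hd \<tau> i j k m u)"
  have p1: "TW \<tau> a b c d permutes {1..n}" using TW_perm[OF t r1] .
  have p2: "TW \<tau> i j k m permutes {1..n}" using TW_perm[OF t r2] .
  have inn: "TW \<tau> a b c d x = TW \<tau> i j k m x \<and> H x - Hd \<tau> a b c d x = H x - Hd \<tau> i j k m x"
    if x: "x \<in> {1..n}" for x
    by (rule E_inj[OF p1 p2 x]) (simp add: e)
  have "TW \<tau> a b c d x = TW \<tau> i j k m x \<and> Hd \<tau> a b c d x = Hd \<tau> i j k m x" for x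
  proof (cases "x \<in> {1..n}")
    case True then show ?thesis using inn[OF True] by simp
  next
    case False then show ?thesis using TW_out[OF False] Hd_out[OF False] r1 r2 by simp
  qed
  then show "TW \<tau> a b c d = TW \<tau> i j k m \<and> Hd \<tau> a b c d = Hd \<tau> i j k m" by (auto simp: fun_eq_iff)
qed simp

lemma main_LS:
  assumes t: "\<tau> permutes {1..n}" and lE: "l = E \<tau> (hc C)"
    and pa: "posroot n \<alpha>" and pb: "posroot n \<beta>"
    and ad1: "admissible n r \<Lambda> l \<alpha>" and ad2: "admissible n r \<Lambda> (refl n r l \<alpha>) \<beta>"
  shows "(ip n \<alpha> \<beta> = 2 \<longrightarrow> \<alpha> = \<beta> \<and> is_simple_root n \<alpha>) \<and>
         (ip n \<alpha> \<beta> \<noteq> 2 \<longrightarrow>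
            (\<exists>!(\<alpha>', \<beta>'). posroot n \<alpha>' \<and> posroot n \<beta>' \<and> \<alpha>' \<noteq> \<alpha> \<and>
               admissible n r \<Lambda> l \<alpha>' \<and> admissible n r \<Lambda> (refl n r l \<alpha>') \<beta>' \<and>
               refl n r (refl n r l \<alpha>) \<beta> = refl n r (refl n r l \<alpha>') \<beta>'))"
proof -
  obtain i j where ij: "1 \<le> i" "i < j" "j \<le> n" "\<alpha> = rt i j" using pa unfolding posroot_def rt_def by blast
  obtain k m where km: "1 \<le> k" "k < m" "m \<le> n" "\<beta> = rt k m" using pb unfolding posroot_def rt_def by blast
  have b1: "badset \<tau> i j = {}" using two_step(3)[OF t ij(1-3) km(1-3), of C] ad1 lE ij(4) by simp
  have b2: "badset (\<tau> \<circ> transpose i j) k m = {}" using two_step(4)[OF t ij(1-3) km(1-3), of C] ad2 lE ij(4) km(4) by simp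
  have ipv: "ip n \<alpha> \<beta> = rt i j k - rt i j m" using ip_root[of k n m \<alpha>] km ij(4) by simp
  have inj: "\<tau> x = \<tau> y \<longleftrightarrow> x = y" for x y using permutes_inj[OF t] by (auto dest: injD)
  show ?thesis
  proof (rule conjI; rule impI)
    assume "ip n \<alpha> \<beta> = 2"
    then have "rt i j k - rt i j m = 2" using ipv by simp
    then have eq: "k = i \<and> m = j" using ij km unfolding rt_def eps_def by (auto split: if_splits)
    then show "\<alpha> = \<beta> \<and> is_simple_root n \<alpha>"
    proof -
      have jj: "j = Suc i"
      proof (rule ccontr)
        assume "j \<noteq> Suc i"
        then have mid: "i < Suc i" "Suc i < j" using ij by auto
        have n1: "\<not> bad \<tau> i j (Suc i)" using b1 mid unfolding badset_def by auto
        have n2: "\<not> bad (\<tau> \<circ> transpose i j) i j (Suc i)" using b2 eq mid unfolding badset_def by auto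
        have d: "\<tau> (Suc i) \<noteq> \<tau> i" "\<tau> (Suc i) \<noteq> \<tau> j" "\<tau> i \<noteq> \<tau> j" using inj mid by auto
        show False using n1 n2 d mid unfolding bad_def by (auto simp: transpose_def split: if_splits)
      qed
      have "\<alpha> = sroot i" using ij jj unfolding sroot_def rt_def by simp
      moreover have "1 \<le> i" "i \<le> n - 1" using ij jj by auto
      ultimately have "is_simple_root n \<alpha>" unfolding is_simple_root_def by blast
      then show ?thesis using eq ij km by simp
    qed
  next
    assume ne2: "ip n \<alpha> \<beta> \<noteq> 2"
    have ne: "(i,j) \<noteq> (k,m)"
    proof
      assume "(i,j) = (k,m)"
      then have "ip n \<alpha> \<beta> = rt i j i - rt i j j" using ipv by simp
      also have "\<dots> = 2" using ij unfolding rt_def eps_def by simp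
      finally show False using ne2 by simp
    qed
    have c1: "\<exists>!x. Vt n \<tau> i j k m x" by (rule core[OF t ij(1-3) km(1-3) ne b1 b2])
    have FG: "refl n r (refl n r l \<alpha>) \<beta> = E (TW \<tau> i j k m) (\<lambda>u. hc C u - Hd \<tau> i j k m u)"
      using two_step(1)[OF t ij(1-3) km(1-3)] lE ij(4) km(4) by simp
    have dG: "deg n r \<Lambda> (refl n r (refl n r l \<alpha>) \<beta>) = deg n r \<Lambda> l + 2"
      using two_step(2)[OF t ij(1-3) km(1-3), of C] lE ij(4) km(4) b1 b2 by simp
    define Q where "Q = (\<lambda>\<alpha>' \<beta>'. posroot n \<alpha>' \<and> posroot n \<beta>' \<and> \<alpha>' \<noteq> \<alpha> \<and>
               admissible n r \<Lambda> l \<alpha>' \<and> admissible n r \<Lambda> (refl n r l \<alpha>') \<beta>' \<and>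
               refl n r (refl n r l \<alpha>) \<beta> = refl n r (refl n r l \<alpha>') \<beta>')"
    have equiv: "Q (rt a b) (rt c d) \<longleftrightarrow> Vt n \<tau> i j k m (a,b,c,d)"
      if r1: "1 \<le> a" "a < b" "b \<le> n" "1 \<le> c" "c < d" "d \<le> n" for a b c d
    proof -
      have F: "refl n r (refl n r l (rt a b)) (rt c d) = E (TW \<tau> a b c d) (\<lambda>u. hc C u - Hd \<tau> a b c d u)"
        using two_step(1)[OF t r1] lE by simp
      have pr: "posroot n (rt a b)" "posroot n (rt c d)" using r1 unfolding posroot_def rt_def by blast+
      have rne: "rt a b \<noteq> \<alpha> \<longleftrightarrow> (a,b) \<noteq> (i,j)" using root_inj[of a b i j] ij r1 by auto
      have feq: "refl n r (refl n r l \<alpha>) \<beta> = refl n r (refl n r l (rt a b)) (rt c d) \<longleftrightarrow>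
           (TW \<tau> a b c d = TW \<tau> i j k m \<and> Hd \<tau> a b c d = Hd \<tau> i j k m)"
        unfolding FG F using final_eq[OF t r1 ij(1-3) km(1-3)] by metis
      show ?thesis
      proof
        assume "Q (rt a b) (rt c d)"
        then show "Vt n \<tau> i j k m (a,b,c,d)" unfolding Q_def Vt_def using rne feq r1 by auto
      next
        assume v: "Vt n \<tau> i j k m (a,b,c,d)"
        then have e1: "refl n r (refl n r l \<alpha>) \<beta> = refl n r (refl n r l (rt a b)) (rt c d)"
          and ne1: "(a,b) \<noteq> (i,j)" using feq unfolding Vt_def by auto
        have "deg n r \<Lambda> (refl n r (refl n r l (rt a b)) (rt c d)) =
          deg n r \<Lambda> l + 2 + 2 * int (card (badset \<tau> a b)) + 2 * int (card (badset (\<tau> \<circ> transpose a b) c d))"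
          using two_step(2)[OF t r1, of C] lE by simp
        then have "card (badset \<tau> a b) = 0 \<and> card (badset (\<tau> \<circ> transpose a b) c d) = 0"
          using e1 dG by simp
        then have "badset \<tau> a b = {}" "badset (\<tau> \<circ> transpose a b) c d = {}" using badset_finite by auto
        then have "admissible n r \<Lambda> l (rt a b)" "admissible n r \<Lambda> (refl n r l (rt a b)) (rt c d)"
          using two_step(3,4)[OF t r1, of C] lE by simp_all
        then show "Q (rt a b) (rt c d)" unfolding Q_def using pr rne ne1 e1 by auto
      qed
    qed
    have posr: "\<exists>a b. 1 \<le> a \<and> a < b \<and> b \<le> n \<and> x = rt a b" if "posroot n x" for x
      using that unfolding posroot_def rt_def by blast
    obtain a b c d where v: "Vt n \<tau> i j k m (a,b,c,d)" using c1 by (metis prod_cases4)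
    have rv: "1 \<le> a" "a < b" "b \<le> n" "1 \<le> c" "c < d" "d \<le> n" using v unfolding Vt_def by auto
    have "\<exists>!x. case x of (\<alpha>', \<beta>') \<Rightarrow> Q \<alpha>' \<beta>'"
    proof (rule ex1I[of _ "(rt a b, rt c d)"])
      show "case (rt a b, rt c d) of (\<alpha>', \<beta>') \<Rightarrow> Q \<alpha>' \<beta>'" using equiv[OF rv] v by simp
    next
      fix x assume qx: "case x of (\<alpha>', \<beta>') \<Rightarrow> Q \<alpha>' \<beta>'"
      obtain x1 x2 where x: "x = (x1, x2)" by (cases x)
      have q: "Q x1 x2" using qx x by simp
      then have "posroot n x1" "posroot n x2" unfolding Q_def by auto
      then obtain a' b' c' d' where r': "1 \<le> a'" "a' < b'" "b' \<le> n" "x1 = rt a' b'"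
          "1 \<le> c'" "c' < d'" "d' \<le> n" "x2 = rt c' d'" using posr by metis
      have "Vt n \<tau> i j k m (a',b',c',d')" using equiv[of a' b' c' d'] r' q by simp
      then have "(a',b',c',d') = (a,b,c,d)" using c1 v by auto
      then show "x = (rt a b, rt c d)" using x r' by simp
    qed
    then show "\<exists>!(\<alpha>', \<beta>'). posroot n \<alpha>' \<and> posroot n \<beta>' \<and> \<alpha>' \<noteq> \<alpha> \<and>
               admissible n r \<Lambda> l \<alpha>' \<and> admissible n r \<Lambda> (refl n r l \<alpha>') \<beta>' \<and>
               refl n r (refl n r l \<alpha>) \<beta> = refl n r (refl n r l \<alpha>') \<beta>'" unfolding Q_def by simp
  qed
qed

end

theorem theorem4p4:
  fixes n r :: nat and \<Lambda> l \<alpha> \<beta> :: "nat \<Rightarrow> real"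
  assumes "n \<ge> 2" and "r \<ge> n + 2"
    and "in_P n \<Lambda>"
    and "\<forall>i. 1 \<le> i \<and> i \<le> n - 1 \<longrightarrow> ip n \<Lambda> (sroot i) > 0"
    and "ip n \<Lambda> (theta n) < real r"
    and "in_WLam n r \<Lambda> l"
    and "posroot n \<alpha>" and "posroot n \<beta>"
    and "admissible n r \<Lambda> l \<alpha>"
    and "admissible n r \<Lambda> (refl n r l \<alpha>) \<beta>"
  shows "(ip n \<alpha> \<beta> = 2 \<longrightarrow> \<alpha> = \<beta> \<and> is_simple_root n \<alpha>) \<and>
         (ip n \<alpha> \<beta> \<noteq> 2 \<longrightarrow>
            (\<exists>!(\<alpha>', \<beta>'). posroot n \<alpha>' \<and> posroot n \<beta>' \<and> \<alpha>' \<noteq> \<alpha> \<and>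
               admissible n r \<Lambda> l \<alpha>' \<and> admissible n r \<Lambda> (refl n r l \<alpha>') \<beta>' \<and>
               refl n r (refl n r l \<alpha>) \<beta> = refl n r (refl n r l \<alpha>') \<beta>'))"
proof -
  interpret LS n r \<Lambda> using assms(1-5) by unfold_locales
  obtain \<tau> C where t: "\<tau> permutes {1..n}" "l = E \<tau> (hc C)" using inWL[OF assms(6)] by blast
  show ?thesis by (rule main_LS[OF t assms(7-10)])
qed

end
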